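(* In $\mathbb{C}\mathbb{P}^2$ with homogeneous coordinates $[x:y:z]$ let $\mathcal{A}$ be the arrangement of the lines $L_1: 2y-z=0$, $L_2: x-y=0$, $L_3: x+y-z=0$, $L_4: x=0$, $L_5: 2x-2y+z=0$, $L_6: x-z=0$, $L_7: 2x+6y-5z=0$, $L_8: y=0$, $L_9: y-z=0$, $L_{10}: z=0$, and consider $L^1_{11}: 3x+2y-3z=0$, $L^1_{12}: 5y-3z=0$, $L^1_{13}: 6x-2y-3z=0$, $L^2_{11}: x-3y-z=0$, $L^2_{12}: 2y+z=0$, $L^2_{13}: 4x+6y-13z=0$. Then $\mathcal{A}\cup\{L^1_{11},L^1_{12},L^1_{13}\}$ and $\mathcal{A}\cup\{L^2_{11},L^2_{12},L^2_{13}\}$ form a rational pair.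
   Context: A line arrangement is a finite set of distinct lines in $\mathbb{C}\mathbb{P}^2$. Its combinatorics is the pair $(\mathcal{A},\mathrm{sing}(\mathcal{A}))$ where each singular point is identified with the set of lines through it. Two arrangements are lattice isomorphic if some bijection between their lines induces a bijection between their sets of singular points. The moduli space $\mathcal{M}(\mathcal{C})$ of a combinatorics $\mathcal{C}$ is the set of arrangements with combinatorics $\mathcal{C}$ modulo $\mathrm{PGL}_3(\mathbb{C})$. A pair of arrangements means two lattice isomorphic arrangements lying in different connected components of their common moduli space. The definition field $\mathbb{F}(\mathcal{A})$ is the number field generated by the coefficients of the lines of $\mathcal{A}$. A pair is rational if both arrangements have definition field $\mathbb{Q}$. *)

theory Defs
  imports "HOL-Analysis.Analysis"
begin

text \<open>Points of CP^2 are represented by nonzero vectors of complex^3.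
  A line of CP^2 is represented by the set of (homogeneous) vectors p with
  a1 p1 + a2 p2 + a3 p3 = 0 for a nonzero coefficient vector a.\<close>

type_synonym cvec = "complex^3"

definition line_of :: "cvec \<Rightarrow> cvec set" where
  "line_of a = {p. (\<Sum>i\<in>UNIV. a$i * p$i) = 0}"

definition is_line :: "cvec set \<Rightarrow> bool" where
  "is_line L \<longleftrightarrow> (\<exists>a. a \<noteq> 0 \<and> L = line_of a)"

definition arrangement :: "cvec set set \<Rightarrow> bool" where
  "arrangement A \<longleftrightarrow> finite A \<and> (\<forall>L\<in>A. is_line L)"

text \<open>Singular points, each identified with the set of lines through it.\<close>
definition sing :: "cvec set set \<Rightarrow> cvec set set set" where
  "sing A = {{L\<in>A. p \<in> L} | p. p \<noteq> 0 \<and> card {L\<in>A. p \<in> L} \<ge> 2}"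

definition lattice_iso :: "cvec set set \<Rightarrow> cvec set set \<Rightarrow> bool" where
  "lattice_iso A B \<longleftrightarrow>
     (\<exists>\<sigma>. bij_betw \<sigma> A B \<and> bij_betw (\<lambda>S. \<sigma> ` S) (sing A) (sing B))"

definition pgl_orbit :: "cvec set set \<Rightarrow> cvec set set set" where
  "pgl_orbit B = {(\<lambda>L. (\<lambda>p. g *v p) ` L) ` B | g :: complex^3^3. invertible g}"

definition arr_of :: "(cvec^'n::finite) \<Rightarrow> cvec set set" where
  "arr_of l = range (\<lambda>i. line_of (l$i))"

definition realizations :: "'n::finite itself \<Rightarrow> cvec set set \<Rightarrow> (cvec^'n) set" where
  "realizations T A0 = {l :: cvec^'n. (\<forall>i. l$i \<noteq> 0) \<and> inj (\<lambda>i. line_of (l$i))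
                                      \<and> lattice_iso A0 (arr_of l)}"

text \<open>Moduli space of the combinatorics of A0: arrangements lattice isomorphic to A0 modulo
  PGL_3(C), with the quotient topology coming from the space of ordered realizations.\<close>
definition moduli_top :: "'n::finite itself \<Rightarrow> cvec set set \<Rightarrow> cvec set set set topology" where
  "moduli_top T A0 = topology (\<lambda>U.
      U \<subseteq> (\<lambda>l. pgl_orbit (arr_of l)) ` realizations T A0 \<and>
      openin (top_of_set (realizations T A0))
             {l \<in> realizations T A0. pgl_orbit (arr_of l) \<in> U})"

text \<open>Definition field equal to Q: every line has a rational coefficient vector
  (equivalently, the normalized coefficients generate Q).\<close>
definition rational_arr :: "cvec set set \<Rightarrow> bool" where
  "rational_arr A \<longleftrightarrow>
     (\<forall>L\<in>A. \<exists>a. a \<noteq> 0 \<and> (\<forall>i. a$i \<in> \<rat>) \<and> L = line_of a)"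

text \<open>A pair: lattice isomorphic arrangements in different connected components of the
  common moduli space. The type 'n indexes the lines and must have card A elements.\<close>
definition is_pair :: "'n::finite itself \<Rightarrow> cvec set set \<Rightarrow> cvec set set \<Rightarrow> bool" where
  "is_pair T A B \<longleftrightarrow> arrangement A \<and> arrangement B \<and> CARD('n) = card A \<and>
     lattice_iso A B \<and>
     \<not> connected_component_of (moduli_top T A) (pgl_orbit A) (pgl_orbit B)"

definition rational_pair :: "'n::finite itself \<Rightarrow> cvec set set \<Rightarrow> cvec set set \<Rightarrow> bool" where
  "rational_pair T A B \<longleftrightarrow> is_pair T A B \<and> rational_arr A \<and> rational_arr B"

definition lin :: "complex \<Rightarrow> complex \<Rightarrow> complex \<Rightarrow> cvec set" where
  "lin a b c = line_of (vector [a, b, c])"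

end

theory Submission
  imports Defs
begin

definition dotp :: "cvec \<Rightarrow> cvec \<Rightarrow> complex" where
  "dotp a p = a$1*p$1 + a$2*p$2 + a$3*p$3"

lemma line_of_dotp: "line_of a = {p. dotp a p = 0}"
  by (simp add: line_of_def dotp_def sum_3)

definition cr :: "cvec \<Rightarrow> cvec \<Rightarrow> cvec" where
  "cr a b = vector [a$2*b$3 - a$3*b$2, a$3*b$1 - a$1*b$3, a$1*b$2 - a$2*b$1]"

definition br :: "cvec \<Rightarrow> cvec \<Rightarrow> cvec \<Rightarrow> complex" where
  "br a b c = det (vector [a,b,c] :: complex^3^3)"

lemma br_expand: "br a b c = a$1*(b$2*c$3 - b$3*c$2) - a$2*(b$1*c$3 - b$3*c$1) + a$3*(b$1*c$2 - b$2*c$1)"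
  unfolding br_def by (simp add: det_3 algebra_simps)

lemma dotp_cr: "dotp c (cr a b) = br a b c"
  by (simp add: dotp_def cr_def br_expand algebra_simps)

lemma cr_comp: "cr a b $ 1 = a$2*b$3 - a$3*b$2" "cr a b $ 2 = a$3*b$1 - a$1*b$3" "cr a b $ 3 = a$1*b$2 - a$2*b$1"
  by (simp_all add: cr_def)

lemma vec3_eq: "(x::cvec) = y \<longleftrightarrow> x$1 = y$1 \<and> x$2 = y$2 \<and> x$3 = y$3"
  by (simp add: vec_eq_iff forall_3)

lemma vec3_zero: "(x::cvec) = 0 \<longleftrightarrow> x$1 = 0 \<and> x$2 = 0 \<and> x$3 = 0"
  by (simp add: vec_eq_iff forall_3)

lemma line_sub_cr:
  assumes "line_of a \<subseteq> line_of b" shows "cr a b = 0"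
proof -
  have h: "\<And>e. dotp b (cr a e) = 0"
  proof -
    fix e
    have "dotp a (cr a e) = 0" by (simp add: dotp_cr br_expand algebra_simps)
    then have "cr a e \<in> line_of a" by (simp add: line_of_dotp)
    with assms show "dotp b (cr a e) = 0" by (auto simp: line_of_dotp)
  qed
  have 1: "dotp b (cr a (vector [1,0,0])) = 0" by (rule h)
  have 2: "dotp b (cr a (vector [0,1,0])) = 0" by (rule h)
  have 3: "dotp b (cr a (vector [0,0,1])) = 0" by (rule h)
  show ?thesis using 1 2 3
    by (simp add: vec3_zero dotp_def cr_comp algebra_simps)
qed

lemma cr_zero_prop:
  assumes "cr a b = 0" "a \<noteq> 0" shows "\<exists>c. b = c *s a"
proof -
  have e: "a$2*b$3 = a$3*b$2" "a$3*b$1 = a$1*b$3" "a$1*b$2 = a$2*b$1"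
    using assms(1) by (simp_all add: vec3_zero cr_comp)
  consider "a$1 \<noteq> 0" | "a$2 \<noteq> 0" | "a$3 \<noteq> 0" using assms(2) by (auto simp: vec3_zero)
  then show ?thesis
  proof cases
    case 1
    show ?thesis
      by (rule exI[of _ "b$1/a$1"], use 1 e in \<open>auto simp: vec3_eq field_simps\<close>; metis mult.commute)
  next
    case 2
    show ?thesis
      by (rule exI[of _ "b$2/a$2"], use 2 e in \<open>auto simp: vec3_eq field_simps\<close>; metis mult.commute)
  next
    case 3
    show ?thesis
      by (rule exI[of _ "b$3/a$3"], use 3 e in \<open>auto simp: vec3_eq field_simps\<close>; metis mult.commute)
  qed
qed

lemma dotp_smult_left: "dotp (c *s a) p = c * dotp a p"
  by (simp add: dotp_def algebra_simps)

lemma prop_line: "c \<noteq> 0 \<Longrightarrow> line_of (c *s a) = line_of a"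
  by (simp add: line_of_dotp dotp_smult_left)

lemma line_eq_prop:
  assumes "line_of a = line_of b" "a \<noteq> 0" "b \<noteq> 0" shows "\<exists>c. c \<noteq> 0 \<and> b = c *s a"
proof -
  from assms(1) have "cr a b = 0" by (intro line_sub_cr) simp
  then obtain c where "b = c *s a" using cr_zero_prop assms(2) by blast
  moreover have "c \<noteq> 0" using calculation assms(3) by auto
  ultimately show ?thesis by blast
qed

lemma line_eq_cr:
  assumes "a \<noteq> 0" "cr a b = 0" "b \<noteq> 0" shows "line_of a = line_of b"
proof -
  obtain c where c: "b = c *s a" using cr_zero_prop assms(1,2) by blast
  then have "c \<noteq> 0" using assms(3) by auto
  then show ?thesis using c prop_line by simp
qed

lemma cr_perp:
  assumes "dotp a p = 0" "dotp b p = 0" "cr a b \<noteq> 0" "p \<noteq> 0"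
  shows "\<exists>l. l \<noteq> 0 \<and> p = l *s cr a b"
proof -
  have "cr (cr a b) p = (dotp a p) *s b - (dotp b p) *s a"
    by (simp add: vec3_eq cr_comp dotp_def algebra_simps)
  then have "cr (cr a b) p = 0" using assms(1,2) by simp
  then obtain l where "p = l *s cr a b" using cr_zero_prop assms(3) by blast
  then show ?thesis using assms(4) by auto
qed

lemma dotp_smult: "dotp a (l *s x) = l * dotp a x"
  by (simp add: dotp_def algebra_simps)

lemma br_rep: "br a a c = 0" "br a b a = 0" "br a b b = 0"
  by (simp_all add: br_expand algebra_simps)

definition Tset :: "(nat \<Rightarrow> cvec) \<Rightarrow> nat set \<Rightarrow> nat \<Rightarrow> nat \<Rightarrow> cvec set set" where
  "Tset v I c d = (\<lambda>m. line_of (v m)) ` {m\<in>I. br (v c) (v d) (v m) = 0}"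

locale cfg =
  fixes v :: "nat \<Rightarrow> cvec" and I :: "nat set"
  assumes fin: "finite I" and nz: "\<And>k. k \<in> I \<Longrightarrow> v k \<noteq> 0"
    and inj: "inj_on (\<lambda>k. line_of (v k)) I"
begin

abbreviation "AA \<equiv> (\<lambda>k. line_of (v k)) ` I"

lemma cr_nz:
  assumes "c \<in> I" "d \<in> I" "c \<noteq> d" shows "cr (v c) (v d) \<noteq> 0"
proof
  assume "cr (v c) (v d) = 0"
  then have "line_of (v c) = line_of (v d)" using line_eq_cr nz assms by blast
  then show False using inj_onD[OF inj _ assms(1,2)] assms(3) by blast
qed

lemma point_set:
  assumes "c \<in> I" "d \<in> I" "c \<noteq> d" "p \<noteq> 0" "p \<in> line_of (v c)" "p \<in> line_of (v d)"
  shows "{L\<in>AA. p \<in> L} = Tset v I c d"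
proof -
  obtain l where l: "l \<noteq> 0" "p = l *s cr (v c) (v d)"
    using cr_perp[of "v c" p "v d"] assms cr_nz by (auto simp: line_of_dotp)
  have "p \<in> line_of (v m) \<longleftrightarrow> br (v c) (v d) (v m) = 0" for m
    using l by (simp add: line_of_dotp dotp_smult dotp_cr)
  then show ?thesis by (auto simp: Tset_def)
qed

lemma memb:
  assumes "T \<in> sing AA" "c \<in> I" "d \<in> I" "c \<noteq> d" "line_of (v c) \<in> T" "line_of (v d) \<in> T"
  shows "T = Tset v I c d"
proof -
  from assms(1) obtain p where p: "p \<noteq> 0" "T = {L\<in>AA. p \<in> L}" by (auto simp: sing_def)
  have "p \<in> line_of (v c)" "p \<in> line_of (v d)" using assms(5,6) p(2) by auto
  with point_set[OF assms(2,3,4) p(1)] p(2) show ?thesis by simp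
qed

lemma singmem:
  assumes "c \<in> I" "d \<in> I" "c \<noteq> d"
  shows "Tset v I c d \<in> sing AA"
proof -
  let ?p = "cr (v c) (v d)"
  have p: "?p \<noteq> 0" using cr_nz assms by auto
  have "?p \<in> line_of (v c)" "?p \<in> line_of (v d)"
    by (simp_all add: line_of_dotp dotp_cr br_rep)
  then have e: "{L\<in>AA. ?p \<in> L} = Tset v I c d" using point_set[OF assms p] by blast
  have "line_of (v c) \<in> Tset v I c d" "line_of (v d) \<in> Tset v I c d"
    using assms by (auto simp: Tset_def br_rep)
  moreover have "line_of (v c) \<noteq> line_of (v d)" using inj_onD[OF inj _ assms(1,2)] assms(3) by blast
  moreover have "finite (Tset v I c d)" using fin by (simp add: Tset_def)
  ultimately have "card (Tset v I c d) \<ge> card {line_of (v c), line_of (v d)}"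
    by (intro card_mono) auto
  then have "card (Tset v I c d) \<ge> 2" using \<open>line_of (v c) \<noteq> line_of (v d)\<close> by simp
  then have "Tset v I c d = {L\<in>AA. ?p \<in> L} \<and> ?p \<noteq> 0 \<and> card {L\<in>AA. ?p \<in> L} \<ge> 2"
    using p e by simp
  then show ?thesis unfolding sing_def mem_Collect_eq by (rule exI)
qed

end

context cfg begin

lemma in_Tset: "k \<in> I \<Longrightarrow> line_of (v k) \<in> Tset v I c d \<longleftrightarrow> br (v c) (v d) (v k) = 0"
  unfolding Tset_def using inj by (auto dest: inj_onD)

lemma Tset_sub: "Tset v I c d \<subseteq> AA" by (auto simp: Tset_def)

lemma sing_Tset:
  assumes "T \<in> sing AA" shows "\<exists>c d. c \<in> I \<and> d \<in> I \<and> c \<noteq> d \<and> T = Tset v I c d"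
proof -
  from assms obtain p where p: "p \<noteq> 0" "T = {L\<in>AA. p \<in> L}" "card T \<ge> 2" by (auto simp: sing_def)
  then obtain L1 L2 where "L1 \<in> T" "L2 \<in> T" "L1 \<noteq> L2"
    by (metis card_2_iff' card_le_Suc0_iff_eq not_less_eq_eq numeral_2_eq_2 card.infinite le_0_eq zero_neq_numeral)
  then obtain c d where cd: "c \<in> I" "d \<in> I" "L1 = line_of (v c)" "L2 = line_of (v d)" using p by auto
  then have "c \<noteq> d" using \<open>L1 \<noteq> L2\<close> by auto
  with memb[OF assms cd(1,2)] cd \<open>L1 \<in> T\<close> \<open>L2 \<in> T\<close> show ?thesis by blast
qed

end

lemma iso_tr:
  assumes cv: "cfg v I" and cw: "cfg w J"
    and b1: "bij_betw \<sigma> ((\<lambda>k. line_of (v k)) ` I) ((\<lambda>k. line_of (w k)) ` J)"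
    and b2: "bij_betw (\<lambda>S. \<sigma> ` S) (sing ((\<lambda>k. line_of (v k)) ` I)) (sing ((\<lambda>k. line_of (w k)) ` J))"
  shows "\<exists>\<pi>. \<pi> \<in> I \<rightarrow>\<^sub>E J \<and> inj_on \<pi> I \<and>
    (\<forall>i\<in>I. \<forall>j\<in>I. \<forall>k\<in>I. br (v i) (v j) (v k) = 0 \<longleftrightarrow> br (w (\<pi> i)) (w (\<pi> j)) (w (\<pi> k)) = 0)"
proof -
  interpret V: cfg v I by fact
  interpret W: cfg w J by fact
  have ex: "\<exists>m. m \<in> J \<and> \<sigma> (line_of (v k)) = line_of (w m)" if "k \<in> I" for k
  proof -
    have "line_of (v k) \<in> V.AA" using that by blast
    then have "\<sigma> (line_of (v k)) \<in> W.AA" by (rule bij_betwE[OF b1, rule_format])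
    then show ?thesis by blast
  qed
  define \<pi> where "\<pi> = restrict (\<lambda>k. SOME m. m \<in> J \<and> \<sigma> (line_of (v k)) = line_of (w m)) I"
  have pi: "\<pi> k \<in> J \<and> \<sigma> (line_of (v k)) = line_of (w (\<pi> k))" if "k \<in> I" for k
  proof -
    have "\<pi> k = (SOME m. m \<in> J \<and> \<sigma> (line_of (v k)) = line_of (w m))" using that by (simp add: \<pi>_def)
    then show ?thesis using someI_ex[OF ex[OF that]] by simp
  qed
  have sinj: "inj_on \<sigma> V.AA" using b1 bij_betw_def by blast
  have pinj: "inj_on \<pi> I"
  proof (rule inj_onI)
    fix i j assume ij: "i \<in> I" "j \<in> I" "\<pi> i = \<pi> j"
    then have "\<sigma> (line_of (v i)) = \<sigma> (line_of (v j))" using pi[OF ij(1)] pi[OF ij(2)] by simp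
    then have "line_of (v i) = line_of (v j)" using inj_onD[OF sinj] ij(1,2) by blast
    then show "i = j" using inj_onD[OF V.inj] ij(1,2) by blast
  qed
  have tr: "br (v i) (v j) (v k) = 0 \<longleftrightarrow> br (w (\<pi> i)) (w (\<pi> j)) (w (\<pi> k)) = 0"
    if ijk: "i \<in> I" "j \<in> I" "k \<in> I" for i j k
  proof (cases "i = j")
    case True then show ?thesis by (simp add: br_rep)
  next
    case False
    let ?T = "Tset v I i j"
    have T: "?T \<in> sing V.AA" using V.singmem ijk False by auto
    have sT: "\<sigma> ` ?T \<in> sing W.AA" by (rule bij_betwE[OF b2, rule_format, OF T])
    have m1: "line_of (v i) \<in> ?T" using V.in_Tset[OF ijk(1)] by (simp add: br_rep)
    have m2: "line_of (v j) \<in> ?T" using V.in_Tset[OF ijk(2)] by (simp add: br_rep)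
    have n1: "line_of (w (\<pi> i)) \<in> \<sigma> ` ?T" using imageI[OF m1, of \<sigma>] pi[OF ijk(1)] by simp
    have n2: "line_of (w (\<pi> j)) \<in> \<sigma> ` ?T" using imageI[OF m2, of \<sigma>] pi[OF ijk(2)] by simp
    have neq: "\<pi> i \<noteq> \<pi> j" using inj_onD[OF pinj] False ijk by blast
    have eq: "\<sigma> ` ?T = Tset w J (\<pi> i) (\<pi> j)"
      using W.memb[OF sT _ _ neq n1 n2] pi[OF ijk(1)] pi[OF ijk(2)] by blast
    have "br (v i) (v j) (v k) = 0 \<longleftrightarrow> line_of (v k) \<in> ?T" using ijk V.in_Tset by simp
    also have "\<dots> \<longleftrightarrow> \<sigma> (line_of (v k)) \<in> \<sigma> ` ?T"
      using inj_on_image_mem_iff[OF sinj, of "line_of (v k)" ?T] V.Tset_sub ijk by blast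
    also have "\<dots> \<longleftrightarrow> line_of (w (\<pi> k)) \<in> Tset w J (\<pi> i) (\<pi> j)" using eq pi[OF ijk(3)] by simp
    also have "\<dots> \<longleftrightarrow> br (w (\<pi> i)) (w (\<pi> j)) (w (\<pi> k)) = 0" using W.in_Tset pi[OF ijk(3)] by simp
    finally show ?thesis .
  qed
  have "\<pi> \<in> I \<rightarrow>\<^sub>E J" using pi by (auto simp: \<pi>_def)
  with pinj tr show ?thesis by blast
qed

lemma iso_from_tr:
  assumes cv: "cfg v I" and cw: "cfg w I"
    and tr: "\<And>i j k. i \<in> I \<Longrightarrow> j \<in> I \<Longrightarrow> k \<in> I \<Longrightarrow> br (v i) (v j) (v k) = 0 \<longleftrightarrow> br (w i) (w j) (w k) = 0"
  shows "lattice_iso ((\<lambda>k. line_of (v k)) ` I) ((\<lambda>k. line_of (w k)) ` I)"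
proof -
  interpret V: cfg v I by fact
  interpret W: cfg w I by fact
  define \<sigma> where "\<sigma> L = line_of (w (the_inv_into I (\<lambda>k. line_of (v k)) L))" for L
  have s: "\<sigma> (line_of (v k)) = line_of (w k)" if "k \<in> I" for k
    using the_inv_into_f_f[OF V.inj that] by (simp add: \<sigma>_def)
  have sinj: "inj_on \<sigma> V.AA"
  proof (rule inj_onI)
    fix L1 L2 assume "L1 \<in> V.AA" "L2 \<in> V.AA" "\<sigma> L1 = \<sigma> L2"
    then obtain i j where ij: "i \<in> I" "j \<in> I" "L1 = line_of (v i)" "L2 = line_of (v j)" "\<sigma> L1 = \<sigma> L2" by blast
    then have "line_of (w i) = line_of (w j)" using s by simp
    then have "i = j" using inj_onD[OF W.inj] ij(1,2) by blast
    then show "L1 = L2" using ij by simp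
  qed
  have simg: "\<sigma> ` V.AA = W.AA"
  proof
    show "\<sigma> ` V.AA \<subseteq> W.AA" using s by (auto simp del: image_image)
    show "W.AA \<subseteq> \<sigma> ` V.AA"
    proof
      fix L assume "L \<in> W.AA"
      then obtain k where "k \<in> I" "L = line_of (w k)" by blast
      then have "L = \<sigma> (line_of (v k))" "line_of (v k) \<in> V.AA" using s by auto
      then show "L \<in> \<sigma> ` V.AA" by blast
    qed
  qed
  have b1: "bij_betw \<sigma> V.AA W.AA" using sinj simg by (simp add: bij_betw_def)
  have img: "\<sigma> ` Tset v I c d = Tset w I c d" if "c \<in> I" "d \<in> I" for c d
  proof -
    have "\<sigma> ` Tset v I c d = (\<lambda>m. \<sigma> (line_of (v m))) ` {m\<in>I. br (v c) (v d) (v m) = 0}"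
      by (simp add: Tset_def image_image)
    also have "\<dots> = (\<lambda>m. line_of (w m)) ` {m\<in>I. br (v c) (v d) (v m) = 0}"
      by (rule image_cong) (auto simp: s)
    also have "{m\<in>I. br (v c) (v d) (v m) = 0} = {m\<in>I. br (w c) (w d) (w m) = 0}"
      using tr that by blast
    finally show ?thesis by (simp add: Tset_def)
  qed
  have b2: "bij_betw (\<lambda>S. \<sigma> ` S) (sing V.AA) (sing W.AA)"
    unfolding bij_betw_def
  proof
    show "inj_on (\<lambda>S. \<sigma> ` S) (sing V.AA)"
    proof (rule inj_onI)
      fix S1 S2 assume a: "S1 \<in> sing V.AA" "S2 \<in> sing V.AA" "\<sigma> ` S1 = \<sigma> ` S2"
      have "S1 \<subseteq> V.AA" "S2 \<subseteq> V.AA" using a(1,2) by (auto simp: sing_def)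
      then show "S1 = S2" using inj_on_image_eq_iff[OF sinj] a(3) by blast
    qed
    show "(\<lambda>S. \<sigma> ` S) ` sing V.AA = sing W.AA"
    proof
      show "(\<lambda>S. \<sigma> ` S) ` sing V.AA \<subseteq> sing W.AA"
      proof
        fix T' assume "T' \<in> (\<lambda>S. \<sigma> ` S) ` sing V.AA"
        then obtain T where T: "T \<in> sing V.AA" "T' = \<sigma> ` T" by blast
        then obtain c d where "c \<in> I" "d \<in> I" "c \<noteq> d" "T = Tset v I c d" using V.sing_Tset by blast
        then show "T' \<in> sing W.AA" using T(2) img W.singmem by simp
      qed
      show "sing W.AA \<subseteq> (\<lambda>S. \<sigma> ` S) ` sing V.AA"
      proof
        fix T assume "T \<in> sing W.AA"
        then obtain c d where cd: "c \<in> I" "d \<in> I" "c \<noteq> d" "T = Tset w I c d" using W.sing_Tset by blast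
        then have "T = \<sigma> ` Tset v I c d" "Tset v I c d \<in> sing V.AA" using img V.singmem by auto
        then show "T \<in> (\<lambda>S. \<sigma> ` S) ` sing V.AA" by blast
      qed
    qed
  qed
  show ?thesis unfolding lattice_iso_def using b1 b2 by blast
qed

definition Q1 :: "(nat \<Rightarrow> cvec) \<Rightarrow> complex" where
  "Q1 v = 5 * br (v 3) (v 7) (v 11) * br (v 3) (v 9) (v 8) - 3 * br (v 3) (v 9) (v 11) * br (v 3) (v 7) (v 8)"
definition Q2 :: "(nat \<Rightarrow> cvec) \<Rightarrow> complex" where
  "Q2 v = 2 * br (v 3) (v 7) (v 11) * br (v 3) (v 9) (v 8) + br (v 3) (v 9) (v 11) * br (v 3) (v 7) (v 8)"

lemma solve1:
  fixes k :: complex assumes "k \<noteq> 0" "e = k * (X - V)" "e = 0" shows "X = V"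
proof -
  have "k * (X - V) = 0" using assms(2,3) by simp
  then have "X - V = 0" using assms(1) by simp
  then show ?thesis by simp
qed

lemma key_norm:
  fixes w :: "nat \<Rightarrow> cvec"
  assumes w3: "w 3 $ 2 = 0" "w 3 $ 3 = 0" "w 3 $ 1 \<noteq> 0"
    and w7: "w 7 $ 1 = 0" "w 7 $ 3 = 0" "w 7 $ 2 \<noteq> 0"
    and w9: "w 9 $ 1 = 0" "w 9 $ 2 = 0" "w 9 $ 3 \<noteq> 0"
    and w2: "w 2 $ 1 = 1" "w 2 $ 2 = 1" "w 2 $ 3 = -1"
    and z: "br (w 7) (w 9) (w 8) = 0" "br (w 2) (w 3) (w 8) = 0" "br (w 3) (w 5) (w 9) = 0"
      "br (w 2) (w 5) (w 7) = 0" "br (w 1) (w 3) (w 7) = 0" "br (w 1) (w 5) (w 8) = 0"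
      "br (w 0) (w 7) (w 9) = 0" "br (w 0) (w 1) (w 2) = 0" "br (w 1) (w 4) (w 9) = 0"
      "br (w 0) (w 3) (w 4) = 0" "br (w 0) (w 5) (w 6) = 0" "br (w 2) (w 4) (w 6) = 0"
      "br (w 7) (w 9) (w 11) = 0" "br (w 2) (w 7) (w 10) = 0" "br (w 1) (w 10) (w 11) = 0"
      "br (w 0) (w 10) (w 12) = 0" "br (w 4) (w 5) (w 12) = 0" "br (w 6) (w 11) (w 12) = 0"
    and nz: "w 8 \<noteq> 0" "w 5 \<noteq> 0" "w 1 \<noteq> 0" "w 0 \<noteq> 0" "w 4 \<noteq> 0" "w 6 \<noteq> 0" "w 11 \<noteq> 0"
      "br (w 3) (w 7) (w 10) \<noteq> 0" "br (w 7) (w 9) (w 12) \<noteq> 0"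
  shows "(Q1 w = 0 \<or> Q2 w = 0) \<and> \<not> (Q1 w = 0 \<and> Q2 w = 0)"
proof -
  obtain a0 a1 a2 a3 a4 a5 a6 a7 a8 a9 a10 a11 a12 where
    eqs: "w 0 = a0" "w 1 = a1" "w 2 = a2" "w 3 = a3" "w 4 = a4" "w 5 = a5" "w 6 = a6"
         "w 7 = a7" "w 8 = a8" "w 9 = a9" "w 10 = a10" "w 11 = a11" "w 12 = a12" by blast
  note w3 = w3[unfolded eqs] and w7 = w7[unfolded eqs] and w9 = w9[unfolded eqs] and w2 = w2[unfolded eqs]
    and z = z[unfolded eqs] and nz = nz[unfolded eqs]
  obtain s t u where stu: "a3 $ 1 = s" "a7 $ 2 = t" "a9 $ 3 = u" "s \<noteq> 0" "t \<noteq> 0" "u \<noteq> 0"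
    using w3 w7 w9 by blast
  note B = br_expand w3(1,2) w7(1,2) w9(1,2) w2 stu(1-3)
  obtain y8 where y8: "a8 $ 2 = y8" by blast
  have "br a7 a9 a8 = t * u * a8 $ 1" by (simp add: B algebra_simps)
  then have 81: "a8 $ 1 = 0" using z(1) stu by simp
  have c83: "br a2 a3 a8 = (- s) * (a8 $ 3 - (- y8))" by (simp add: B 81 y8 algebra_simps)
  have 83: "a8 $ 3 = - y8" by (rule solve1[OF _ c83 z(2)]) (use stu in simp)
  have y8nz: "y8 \<noteq> 0" using nz(1) 81 83 y8 by (simp add: vec3_zero)
  have "br a3 a5 a9 = s * u * a5 $ 2" by (simp add: B algebra_simps)
  then have 52: "a5 $ 2 = 0" using z(3) stu by simp
  obtain x5 where x5: "a5 $ 1 = x5" by blast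
  have c53: "br a2 a5 a7 = (- t) * (a5 $ 3 - (- x5))" by (simp add: B 52 x5 algebra_simps)
  have 53: "a5 $ 3 = - x5" by (rule solve1[OF _ c53 z(4)]) (use stu in simp)
  have x5nz: "x5 \<noteq> 0" using nz(2) 52 53 x5 by (simp add: vec3_zero)
  have "br a1 a3 a7 = s * t * a1 $ 3" by (simp add: B algebra_simps)
  then have 13: "a1 $ 3 = 0" using z(5) stu by simp
  obtain x1 where x1: "a1 $ 1 = x1" by blast
  have c12: "br a1 a5 a8 = (x5 * y8) * (a1 $ 2 - (- x1))" by (simp add: B 13 x1 x5 52 53 y8 81 83 algebra_simps)
  have 12: "a1 $ 2 = - x1" by (rule solve1[OF _ c12 z(6)]) (use x5nz y8nz in simp)
  have x1nz: "x1 \<noteq> 0" using nz(3) 12 13 x1 by (simp add: vec3_zero)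
  have "br a0 a7 a9 = t * u * a0 $ 1" by (simp add: B algebra_simps)
  then have 01: "a0 $ 1 = 0" using z(7) stu by simp
  obtain z0 where z0: "a0 $ 3 = z0" by blast
  have c02: "br a0 a1 a2 = x1 * (a0 $ 2 - (- 2 * z0))" by (simp add: B 01 z0 x1 12 13 algebra_simps)
  have 02: "a0 $ 2 = - 2 * z0" by (rule solve1[OF _ c02 z(8)]) (use x1nz in simp)
  have z0nz: "z0 \<noteq> 0" using nz(4) 01 02 z0 by (simp add: vec3_zero)
  obtain x4 where x4: "a4 $ 1 = x4" by blast
  have c42: "br a1 a4 a9 = (u * x1) * (a4 $ 2 - (- x4))" by (simp add: B x1 12 13 x4 algebra_simps)
  have 42: "a4 $ 2 = - x4" by (rule solve1[OF _ c42 z(9)]) (use stu x1nz in simp)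
  obtain z4 where z4: "a4 $ 3 = z4" by blast
  have cx4e: "br a0 a3 a4 = (- s * z0) * (x4 - 2 * z4)" by (simp add: B 01 02 z0 x4 42 z4 algebra_simps)
  have x4e: "x4 = 2 * z4" by (rule solve1[OF _ cx4e z(10)]) (use stu z0nz in simp)
  have z4nz: "z4 \<noteq> 0" using nz(5) x4 42 z4 x4e by (simp add: vec3_zero)
  obtain x6 z6 where x6: "a6 $ 1 = x6" "a6 $ 3 = z6" by blast
  have c62: "br a0 a5 a6 = (z0 * x5) * (a6 $ 2 - (- 2 * z6 - 2 * x6))" by (simp add: B 01 02 z0 x5 52 53 x6 algebra_simps)
  have 62: "a6 $ 2 = - 2 * z6 - 2 * x6" by (rule solve1[OF _ c62 z(11)]) (use z0nz x5nz in simp)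
  have cz6e: "br a2 a4 a6 = (2 * z4) * (z6 - (- 5 / 2 * x6))" by (simp add: B x4 x4e 42 z4 x6 62 algebra_simps)
  have z6e: "z6 = - 5 / 2 * x6" by (rule solve1[OF _ cz6e z(12)]) (use z4nz in simp)
  have x6nz: "x6 \<noteq> 0" using nz(6) x6 62 z6e by (simp add: vec3_zero)
  have "br a7 a9 a11 = t * u * a11 $ 1" by (simp add: B algebra_simps)
  then have 111: "a11 $ 1 = 0" using z(13) stu by simp
  obtain b c where bc: "a11 $ 2 = b" "a11 $ 3 = c" by blast
  obtain p q where pq: "a10 $ 1 = p" "a10 $ 2 = q" by blast
  have c103: "br a2 a7 a10 = t * (a10 $ 3 - (- p))" by (simp add: B pq algebra_simps)
  have 103: "a10 $ 3 = - p" by (rule solve1[OF _ c103 z(14)]) (use stu in simp)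
  obtain x y zz where xyz: "a12 $ 1 = x" "a12 $ 2 = y" "a12 $ 3 = zz" by blast
  have "br a3 a7 a10 = - s * t * p" by (simp add: B pq 103 algebra_simps)
  then have pnz: "p \<noteq> 0" using nz(8) by auto
  have "br a7 a9 a12 = t * u * x" by (simp add: B xyz algebra_simps)
  then have xnz: "x \<noteq> 0" using nz(9) by auto
  have "br a1 a10 a11 = x1 * (q * c + p * b + p * c)" by (simp add: B x1 12 13 pq 103 111 bc algebra_simps)
  then have E1: "q * c + p * b + p * c = 0" using z(15) x1nz by simp
  have "br a0 a10 a12 = z0 * (2*p*zz + 2*p*x + p*y - q*x)" by (simp add: B 01 02 z0 pq 103 xyz algebra_simps)
  then have E2: "2*p*zz + 2*p*x + p*y - q*x = 0" using z(16) z0nz by simp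
  have "br a4 a5 a12 = z4 * x5 * (3*y + 2*x + 2*zz)" by (simp add: B x4 x4e 42 z4 x5 52 53 xyz algebra_simps)
  then have E3: "3*y + 2*x + 2*zz = 0" using z(17) z4nz x5nz by simp
  have "br a6 a11 a12 = x6 / 2 * (2*b*zz - 2*c*y + 6*c*x + 5*b*x)" by (simp add: B x6 62 z6e 111 bc xyz algebra_simps)
  then have E4: "2*b*zz - 2*c*y + 6*c*x + 5*b*x = 0" using z(18) x6nz by simp
  have "x * p * ((3*b+5*c)*(b-2*c)) = 0" using E1 E2 E3 E4 by algebra
  then have main: "(3*b+5*c)*(b-2*c) = 0" using xnz pnz by simp
  have q1: "Q1 w = - (s * s * t * u * y8) * (3*b + 5*c)" by (simp add: Q1_def eqs B 81 83 y8 111 bc algebra_simps power2_eq_square)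
  have q2: "Q2 w = s * s * t * u * y8 * (b - 2*c)" by (simp add: Q2_def eqs B 81 83 y8 111 bc algebra_simps power2_eq_square)
  have bcnz: "b \<noteq> 0 \<or> c \<noteq> 0" using nz(7) 111 bc by (auto simp: vec3_zero)
  show ?thesis
  proof
    show "Q1 w = 0 \<or> Q2 w = 0" using main q1 q2 by auto
    show "\<not> (Q1 w = 0 \<and> Q2 w = 0)" using q1 q2 stu y8nz bcnz by auto
  qed
qed

lemma rows_mult: "(vector [a, b, c] :: complex^3^3) ** transpose M = vector [M *v a, M *v b, M *v c]"
  by (simp add: vec_eq_iff forall_3 matrix_matrix_mult_def matrix_vector_mult_def transpose_def sum_3 algebra_simps)

lemma br_mat: "br (M *v a) (M *v b) (M *v c) = det M * br a b c"
proof -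
  have "br (M *v a) (M *v b) (M *v c) = det ((vector [a, b, c] :: complex^3^3) ** transpose M)"
    by (simp add: br_def rows_mult)
  also have "\<dots> = br a b c * det M" by (simp add: det_mul det_transpose br_def)
  finally show ?thesis by simp
qed

lemma br_cyc: "br a b c = br b c a" by (simp add: br_expand algebra_simps)

lemma dotp_sym: "dotp a b = dotp b a" by (simp add: dotp_def algebra_simps)

lemma mv_rows: "(vector [c1 *s r1, c2 *s r2, c3 *s r3] :: complex^3^3) *v x = vector [c1 * dotp r1 x, c2 * dotp r2 x, c3 * dotp r3 x]"
  by (simp add: vec_eq_iff forall_3 matrix_vector_mult_def sum_3 dotp_def algebra_simps)

lemma det_rows: "det (vector [c1 *s r1, c2 *s r2, c3 *s r3] :: complex^3^3) = c1 * c2 * c3 * det (vector [r1, r2, r3] :: complex^3^3)"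
  by (simp add: det_3 algebra_simps)

lemma det_cr: "det (vector [cr b c, cr c a, cr a b] :: complex^3^3) = br a b c ^ 2"
  by (simp add: det_3 cr_comp br_expand power2_eq_square algebra_simps)

lemma mat_nz: "det (M :: complex^3^3) \<noteq> 0 \<Longrightarrow> x \<noteq> 0 \<Longrightarrow> M *v x \<noteq> 0"
proof
  assume d: "det M \<noteq> 0" and x: "x \<noteq> 0" and m: "M *v x = 0"
  have "invertible M" using d invertible_det_nz by blast
  then obtain B where "B ** M = mat 1" using invertible_left_inverse by blast
  then have "x = B *v (M *v x)" by (simp add: matrix_vector_mul_assoc)
  with m x show False by simp
qed

lemma dotp_cr': "dotp (cr a b) x = br a b x"
  using dotp_cr dotp_sym by metis

lemma Q1_mat: "Q1 (\<lambda>k. M *v v k) = (det M)^2 * Q1 v"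
  by (simp add: Q1_def br_mat power2_eq_square algebra_simps)
lemma Q2_mat: "Q2 (\<lambda>k. M *v v k) = (det M)^2 * Q2 v"
  by (simp add: Q2_def br_mat power2_eq_square algebra_simps)

lemma key_gen:
  fixes v :: "nat \<Rightarrow> cvec"
  assumes z: "br (v 7) (v 9) (v 8) = 0" "br (v 2) (v 3) (v 8) = 0" "br (v 3) (v 5) (v 9) = 0"
      "br (v 2) (v 5) (v 7) = 0" "br (v 1) (v 3) (v 7) = 0" "br (v 1) (v 5) (v 8) = 0"
      "br (v 0) (v 7) (v 9) = 0" "br (v 0) (v 1) (v 2) = 0" "br (v 1) (v 4) (v 9) = 0"
      "br (v 0) (v 3) (v 4) = 0" "br (v 0) (v 5) (v 6) = 0" "br (v 2) (v 4) (v 6) = 0"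
      "br (v 7) (v 9) (v 11) = 0" "br (v 2) (v 7) (v 10) = 0" "br (v 1) (v 10) (v 11) = 0"
      "br (v 0) (v 10) (v 12) = 0" "br (v 4) (v 5) (v 12) = 0" "br (v 6) (v 11) (v 12) = 0"
    and nz: "v 8 \<noteq> 0" "v 5 \<noteq> 0" "v 1 \<noteq> 0" "v 0 \<noteq> 0" "v 4 \<noteq> 0" "v 6 \<noteq> 0" "v 11 \<noteq> 0"
      "br (v 3) (v 7) (v 10) \<noteq> 0" "br (v 7) (v 9) (v 12) \<noteq> 0"
    and fr: "br (v 3) (v 7) (v 9) \<noteq> 0" "br (v 7) (v 9) (v 2) \<noteq> 0" "br (v 9) (v 3) (v 2) \<noteq> 0"
      "br (v 3) (v 7) (v 2) \<noteq> 0"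
  shows "(Q1 v = 0 \<or> Q2 v = 0) \<and> \<not> (Q1 v = 0 \<and> Q2 v = 0)"
proof -
  define \<alpha> where "\<alpha> = br (v 7) (v 9) (v 2)"
  define \<beta> where "\<beta> = br (v 9) (v 3) (v 2)"
  define \<gamma> where "\<gamma> = br (v 3) (v 7) (v 2)"
  define M where "M = (vector [(1/\<alpha>) *s cr (v 7) (v 9), (1/\<beta>) *s cr (v 9) (v 3), (-1/\<gamma>) *s cr (v 3) (v 7)] :: complex^3^3)"
  have Mx: "(M *v x) $ 1 = (1/\<alpha>) * br (v 7) (v 9) x" "(M *v x) $ 2 = (1/\<beta>) * br (v 9) (v 3) x"
    "(M *v x) $ 3 = (-1/\<gamma>) * br (v 3) (v 7) x" for x
    unfolding M_def mv_rows by (simp_all add: dotp_cr')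
  have abg: "\<alpha> \<noteq> 0" "\<beta> \<noteq> 0" "\<gamma> \<noteq> 0" using fr by (simp_all add: \<alpha>_def \<beta>_def \<gamma>_def)
  have "det M = (1/\<alpha>) * (1/\<beta>) * (-1/\<gamma>) * br (v 3) (v 7) (v 9) ^ 2"
    unfolding M_def det_rows det_cr ..
  then have dM: "det M \<noteq> 0" using abg fr(1) by simp
  define w where "w k = M *v v k" for k
  have cyc: "br (v 7) (v 9) (v 3) = br (v 3) (v 7) (v 9)" "br (v 9) (v 3) (v 7) = br (v 3) (v 7) (v 9)"
    using br_cyc by metis+
  have wz: "br (w i) (w j) (w k) = 0" if "br (v i) (v j) (v k) = 0" for i j k
    using that by (simp add: w_def br_mat)
  have wn: "br (w i) (w j) (w k) \<noteq> 0" if "br (v i) (v j) (v k) \<noteq> 0" for i j k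
    using that dM by (simp add: w_def br_mat)
  have wv: "w k \<noteq> 0" if "v k \<noteq> 0" for k
    using mat_nz[OF dM that] by (simp add: w_def)
  have "(Q1 w = 0 \<or> Q2 w = 0) \<and> \<not> (Q1 w = 0 \<and> Q2 w = 0)"
  proof (rule key_norm)
    show "w 3 $ 2 = 0" "w 3 $ 3 = 0" "w 7 $ 1 = 0" "w 7 $ 3 = 0" "w 9 $ 1 = 0" "w 9 $ 2 = 0"
      by (simp_all add: w_def Mx br_rep)
    show "w 3 $ 1 \<noteq> 0" "w 7 $ 2 \<noteq> 0" "w 9 $ 3 \<noteq> 0"
      using abg fr(1) by (simp_all add: w_def Mx cyc)
    show "w 2 $ 1 = 1" "w 2 $ 2 = 1" "w 2 $ 3 = -1"
      using abg by (simp_all add: w_def Mx \<alpha>_def[symmetric] \<beta>_def[symmetric] \<gamma>_def[symmetric])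
    show "br (w 7) (w 9) (w 8) = 0" "br (w 2) (w 3) (w 8) = 0" "br (w 3) (w 5) (w 9) = 0"
      "br (w 2) (w 5) (w 7) = 0" "br (w 1) (w 3) (w 7) = 0" "br (w 1) (w 5) (w 8) = 0"
      "br (w 0) (w 7) (w 9) = 0" "br (w 0) (w 1) (w 2) = 0" "br (w 1) (w 4) (w 9) = 0"
      "br (w 0) (w 3) (w 4) = 0" "br (w 0) (w 5) (w 6) = 0" "br (w 2) (w 4) (w 6) = 0"
      "br (w 7) (w 9) (w 11) = 0" "br (w 2) (w 7) (w 10) = 0" "br (w 1) (w 10) (w 11) = 0"
      "br (w 0) (w 10) (w 12) = 0" "br (w 4) (w 5) (w 12) = 0" "br (w 6) (w 11) (w 12) = 0"
      using z by (simp_all add: wz)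
    show "w 8 \<noteq> 0" "w 5 \<noteq> 0" "w 1 \<noteq> 0" "w 0 \<noteq> 0" "w 4 \<noteq> 0" "w 6 \<noteq> 0" "w 11 \<noteq> 0"
      "br (w 3) (w 7) (w 10) \<noteq> 0" "br (w 7) (w 9) (w 12) \<noteq> 0"
      using nz by (simp_all add: wv wn)
  qed
  moreover have "Q1 w = (det M)^2 * Q1 v" "Q2 w = (det M)^2 * Q2 v"
    unfolding w_def by (rule Q1_mat, rule Q2_mat)
  ultimately show ?thesis using dM by simp
qed

fun brZ :: "int*int*int \<Rightarrow> int*int*int \<Rightarrow> int*int*int \<Rightarrow> int" where
 "brZ (a1,a2,a3) (b1,b2,b3) (c1,c2,c3) = a1*(b2*c3-b3*c2) - a2*(b1*c3-b3*c1) + a3*(b1*c2-b2*c1)"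
fun crZ :: "int*int*int \<Rightarrow> int*int*int \<Rightarrow> int*int*int" where
 "crZ (a1,a2,a3) (b1,b2,b3) = (a2*b3 - a3*b2, a3*b1 - a1*b3, a1*b2 - a2*b1)"
definition U1 :: "(int*int*int) list" where
 "U1 = [(0,2,-1),(1,-1,0),(1,1,-1),(1,0,0),(2,-2,1),(1,0,-1),(2,6,-5),(0,1,0),(0,1,-1),(0,0,1),(3,2,-3),(0,5,-3),(6,-2,-3)]"
definition U2 :: "(int*int*int) list" where
 "U2 = [(0,2,-1),(1,-1,0),(1,1,-1),(1,0,0),(2,-2,1),(1,0,-1),(2,6,-5),(0,1,0),(0,1,-1),(0,0,1),(1,-3,-1),(0,2,1),(4,6,-13)]"

fun vecZ :: "int*int*int \<Rightarrow> cvec" where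
  "vecZ (a,b,c) = vector [of_int a, of_int b, of_int c]"

lemma br_vecZ: "br (vecZ a) (vecZ b) (vecZ c) = of_int (brZ a b c)"
  by (cases a; cases b; cases c) (simp add: br_expand)

lemma cr_vecZ: "cr (vecZ a) (vecZ b) = vecZ (crZ a b)"
  by (cases a; cases b) (simp add: vec3_eq cr_comp)

lemma vecZ_zero: "vecZ a = 0 \<longleftrightarrow> a = (0,0,0)"
  by (cases a) (simp add: vec3_zero)

definition u1 :: "nat \<Rightarrow> cvec" where "u1 k = vecZ (U1 ! k)"
definition u2 :: "nat \<Rightarrow> cvec" where "u2 k = vecZ (U2 ! k)"

definition Cu :: "nat \<Rightarrow> nat \<Rightarrow> nat \<Rightarrow> bool" where
  "Cu i j k \<longleftrightarrow> brZ (U1!i) (U1!j) (U1!k) = 0"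

lemma all13: "(\<forall>i<13. P i) \<longleftrightarrow> list_all P [0..<13]"
  by (auto simp: list_all_iff)

lemma chk_tr: "\<forall>i<13. \<forall>j<13. \<forall>k<13. (brZ (U1!i) (U1!j) (U1!k) = 0) = (brZ (U2!i) (U2!j) (U2!k) = 0)"
  unfolding all13 by code_simp

lemma chk_nz: "\<forall>i<13. U1!i \<noteq> (0,0,0) \<and> U2!i \<noteq> (0,0,0)"
  unfolding all13 by code_simp

lemma chk_dist: "\<forall>i<13. \<forall>j<13. i \<noteq> j \<longrightarrow> crZ (U1!i) (U1!j) \<noteq> (0,0,0) \<and> crZ (U2!i) (U2!j) \<noteq> (0,0,0)"
  unfolding all13 by code_simp

lemma u_tr: "i < 13 \<Longrightarrow> j < 13 \<Longrightarrow> k < 13 \<Longrightarrow> br (u1 i) (u1 j) (u1 k) = 0 \<longleftrightarrow> br (u2 i) (u2 j) (u2 k) = 0"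
  using chk_tr by (simp add: u1_def u2_def br_vecZ)

lemma u1_Cu: "br (u1 i) (u1 j) (u1 k) = 0 \<longleftrightarrow> Cu i j k"
  by (simp add: u1_def br_vecZ Cu_def)

lemma cfg_u1: "cfg u1 {..<13}"
proof
  show "finite {..<13::nat}" by simp
  show "u1 k \<noteq> 0" if "k \<in> {..<13}" for k using chk_nz that by (simp add: u1_def vecZ_zero)
  show "inj_on (\<lambda>k. line_of (u1 k)) {..<13}"
  proof (rule inj_onI, rule ccontr)
    fix i j assume a: "i \<in> {..<13}" "j \<in> {..<13}" "line_of (u1 i) = line_of (u1 j)" "i \<noteq> j"
    then have "cr (u1 i) (u1 j) = 0" using line_sub_cr by simp
    then show False using chk_dist a by (simp add: u1_def cr_vecZ vecZ_zero)
  qed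
qed

lemma cfg_u2: "cfg u2 {..<13}"
proof
  show "finite {..<13::nat}" by simp
  show "u2 k \<noteq> 0" if "k \<in> {..<13}" for k using chk_nz that by (simp add: u2_def vecZ_zero)
  show "inj_on (\<lambda>k. line_of (u2 k)) {..<13}"
  proof (rule inj_onI, rule ccontr)
    fix i j assume a: "i \<in> {..<13}" "j \<in> {..<13}" "line_of (u2 i) = line_of (u2 j)" "i \<noteq> j"
    then have "cr (u2 i) (u2 j) = 0" using line_sub_cr by simp
    then show False using chk_dist a by (simp add: u2_def cr_vecZ vecZ_zero)
  qed
qed

lemma Q1_u1: "Q1 u1 = 0"
  unfolding Q1_def u1_def br_vecZ by (simp add: U1_def)
lemma Q2_u2: "Q2 u2 = 0"
  unfolding Q2_def u2_def br_vecZ by (simp add: U2_def)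

definition TrS :: "(nat \<Rightarrow> cvec) \<Rightarrow> (nat \<times> nat \<times> nat) set" where
  "TrS v = {(i,j,k). i < 13 \<and> j < 13 \<and> k < 13 \<and> br (v i) (v j) (v k) = 0}"

lemma TrS_u1: "(i,j,k) \<in> TrS u1 \<longleftrightarrow> i < 13 \<and> j < 13 \<and> k < 13 \<and> Cu i j k"
  by (simp add: TrS_def u1_Cu)

lemma chk_key: "Cu 7 9 8 \<and> Cu 2 3 8 \<and> Cu 3 5 9 \<and> Cu 2 5 7 \<and> Cu 1 3 7 \<and> Cu 1 5 8 \<and>
   Cu 0 7 9 \<and> Cu 0 1 2 \<and> Cu 1 4 9 \<and> Cu 0 3 4 \<and> Cu 0 5 6 \<and> Cu 2 4 6 \<and>
   Cu 7 9 11 \<and> Cu 2 7 10 \<and> Cu 1 10 11 \<and> Cu 0 10 12 \<and> Cu 4 5 12 \<and> Cu 6 11 12 \<and>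
   \<not> Cu 3 7 10 \<and> \<not> Cu 7 9 12 \<and> \<not> Cu 3 7 9 \<and> \<not> Cu 7 9 2 \<and> \<not> Cu 9 3 2 \<and> \<not> Cu 3 7 2"
  by code_simp

lemma key_tr:
  assumes tr: "TrS v = TrS u1" and nz: "\<forall>k<13. v k \<noteq> 0"
  shows "(Q1 v = 0 \<or> Q2 v = 0) \<and> \<not> (Q1 v = 0 \<and> Q2 v = 0)"
proof -
  have e: "br (v i) (v j) (v k) = 0 \<longleftrightarrow> Cu i j k" if "i < 13" "j < 13" "k < 13" for i j k
  proof -
    have "br (v i) (v j) (v k) = 0 \<longleftrightarrow> (i,j,k) \<in> TrS v" using that by (simp add: TrS_def)
    also have "\<dots> \<longleftrightarrow> Cu i j k" using that by (simp add: tr TrS_u1)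
    finally show ?thesis .
  qed
  show ?thesis
    by (rule key_gen) (simp_all add: e chk_key nz chk_key[simplified])
qed

definition MszL :: "nat \<Rightarrow> nat \<Rightarrow> nat" where
  "MszL i j = length (filter (Cu i j) [0..<13])"
definition cntL :: "nat \<Rightarrow> nat \<Rightarrow> nat" where
  "cntL i s = length (filter (\<lambda>j. j \<noteq> i \<and> MszL i j = s) [0..<13])"

lemma card_filter: "length (filter P [0..<n]) = card {j. j < n \<and> P j}"
proof -
  have "set (filter P [0..<n]) = {j. j < n \<and> P j}" by auto
  moreover have "distinct (filter P [0..<n])" by simp
  ultimately show ?thesis by (metis distinct_card)
qed

lemma chk_aut1: "\<forall>x<13. list_all (\<lambda>i. (cntL x 2 = cntL i 2 \<and> cntL x 3 = cntL i 3 \<and> cntL x 4 = cntL i 4 \<and> cntL x 5 = cntL i 5) \<longrightarrow> x = i) [0,1,2,5,7,10]"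
  unfolding all13 by code_simp

lemma chk_aut2: "\<forall>i<13. \<forall>x<13. (list_all (\<lambda>j. list_all (\<lambda>k. Cu x j k = Cu i j k) [0,1,2,5,7,10]) [0,1,2,5,7,10]) \<longrightarrow> x = i"
  unfolding all13 by code_simp

lemma aut:
  assumes b: "bij_betw \<rho> {..<13::nat} {..<13}"
    and c: "\<And>i j k. i < 13 \<Longrightarrow> j < 13 \<Longrightarrow> k < 13 \<Longrightarrow> Cu (\<rho> i) (\<rho> j) (\<rho> k) = Cu i j k"
  shows "\<And>i. i < 13 \<Longrightarrow> \<rho> i = i"
proof -
  have r13: "\<rho> i < 13" if "i < 13" for i using bij_betwE[OF b] that by auto
  have inj: "inj_on \<rho> {..<13}" using b bij_betw_def by blast
  have sur: "\<exists>j'. j' < 13 \<and> j = \<rho> j'" if "j < 13" for j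
    using b that unfolding bij_betw_def by (metis imageE lessThan_iff)
  have Ms: "MszL (\<rho> i) (\<rho> j) = MszL i j" if ij: "i < 13" "j < 13" for i j
  proof -
    have "{k. k < 13 \<and> Cu (\<rho> i) (\<rho> j) k} = \<rho> ` {k. k < 13 \<and> Cu i j k}"
    proof
      show "{k. k < 13 \<and> Cu (\<rho> i) (\<rho> j) k} \<subseteq> \<rho> ` {k. k < 13 \<and> Cu i j k}"
      proof
        fix k assume "k \<in> {k. k < 13 \<and> Cu (\<rho> i) (\<rho> j) k}"
        then obtain k' where "k' < 13" "k = \<rho> k'" "Cu (\<rho> i) (\<rho> j) k" using sur by blast
        then show "k \<in> \<rho> ` {k. k < 13 \<and> Cu i j k}" using c ij by auto
      qed
      show "\<rho> ` {k. k < 13 \<and> Cu i j k} \<subseteq> {k. k < 13 \<and> Cu (\<rho> i) (\<rho> j) k}"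
        using c ij r13 by auto
    qed
    moreover have "inj_on \<rho> {k. k < 13 \<and> Cu i j k}" using inj by (rule inj_on_subset) auto
    ultimately show ?thesis unfolding MszL_def card_filter by (simp add: card_image)
  qed
  have cn: "cntL (\<rho> i) s = cntL i s" if i: "i < 13" for i s
  proof -
    have "{j. j < 13 \<and> (j \<noteq> \<rho> i \<and> MszL (\<rho> i) j = s)} = \<rho> ` {j. j < 13 \<and> (j \<noteq> i \<and> MszL i j = s)}"
    proof
      show "{j. j < 13 \<and> (j \<noteq> \<rho> i \<and> MszL (\<rho> i) j = s)} \<subseteq> \<rho> ` {j. j < 13 \<and> (j \<noteq> i \<and> MszL i j = s)}"
      proof
        fix j assume a: "j \<in> {j. j < 13 \<and> (j \<noteq> \<rho> i \<and> MszL (\<rho> i) j = s)}"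
        then obtain j' where j': "j' < 13" "j = \<rho> j'" using sur by blast
        then have "j' \<noteq> i" using a by auto
        moreover have "MszL i j' = s" using a j' Ms[OF i j'(1)] by simp
        ultimately show "j \<in> \<rho> ` {j. j < 13 \<and> (j \<noteq> i \<and> MszL i j = s)}" using j' by blast
      qed
      show "\<rho> ` {j. j < 13 \<and> (j \<noteq> i \<and> MszL i j = s)} \<subseteq> {j. j < 13 \<and> (j \<noteq> \<rho> i \<and> MszL (\<rho> i) j = s)}"
      proof
        fix j assume "j \<in> \<rho> ` {j. j < 13 \<and> (j \<noteq> i \<and> MszL i j = s)}"
        then obtain j' where j': "j' < 13" "j' \<noteq> i" "MszL i j' = s" "j = \<rho> j'" by blast
        have "\<rho> j' \<noteq> \<rho> i" using inj_onD[OF inj] j' i by fastforce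
        then show "j \<in> {j. j < 13 \<and> (j \<noteq> \<rho> i \<and> MszL (\<rho> i) j = s)}"
          using j' Ms[OF i j'(1)] r13 by simp
      qed
    qed
    moreover have "inj_on \<rho> {j. j < 13 \<and> (j \<noteq> i \<and> MszL i j = s)}" using inj by (rule inj_on_subset) auto
    ultimately show ?thesis unfolding cntL_def card_filter by (simp add: card_image)
  qed
  have F0: "\<rho> i = i" if "i \<in> set [0,1,2,5,7,10]" for i
  proof -
    have i: "i < 13" using that by auto
    have "list_all (\<lambda>i'. (cntL (\<rho> i) 2 = cntL i' 2 \<and> cntL (\<rho> i) 3 = cntL i' 3 \<and> cntL (\<rho> i) 4 = cntL i' 4 \<and> cntL (\<rho> i) 5 = cntL i' 5) \<longrightarrow> \<rho> i = i') [0,1,2,5,7,10]"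
      using chk_aut1 r13[OF i] by blast
    then have "(cntL (\<rho> i) 2 = cntL i 2 \<and> cntL (\<rho> i) 3 = cntL i 3 \<and> cntL (\<rho> i) 4 = cntL i 4 \<and> cntL (\<rho> i) 5 = cntL i 5) \<longrightarrow> \<rho> i = i"
      using that unfolding list_all_iff by blast
    then show ?thesis using cn[OF i] by simp
  qed
  show "\<rho> i = i" if i: "i < 13" for i
  proof -
    have "Cu (\<rho> i) j k = Cu i j k" if "j \<in> set [0,1,2,5,7,10]" "k \<in> set [0,1,2,5,7,10]" for j k
    proof -
      have "Cu (\<rho> i) j k = Cu (\<rho> i) (\<rho> j) (\<rho> k)" using F0 that by simp
      also have "\<dots> = Cu i j k" using c i that by auto
      finally show ?thesis .
    qed
    then have "list_all (\<lambda>j. list_all (\<lambda>k. Cu (\<rho> i) j k = Cu i j k) [0,1,2,5,7,10]) [0,1,2,5,7,10]"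
      by (simp add: list_all_iff)
    then show ?thesis using chk_aut2 i r13[OF i] by blast
  qed
qed

definition Perms :: "(nat \<Rightarrow> nat) set" where
  "Perms = {\<pi>. \<pi> \<in> {..<13} \<rightarrow>\<^sub>E {..<13} \<and> inj_on \<pi> {..<13}}"

lemma finite_Perms: "finite Perms"
proof -
  have "Perms \<subseteq> {..<13::nat} \<rightarrow>\<^sub>E {..<13::nat}" by (auto simp: Perms_def)
  moreover have "finite ({..<13::nat} \<rightarrow>\<^sub>E {..<13::nat})" by (simp add: finite_PiE)
  ultimately show ?thesis by (rule finite_subset)
qed

lemma Perms_bij: assumes "\<pi> \<in> Perms" shows "bij_betw \<pi> {..<13} {..<13}"
proof -
  have "\<pi> ` {..<13} \<subseteq> {..<13}" "inj_on \<pi> {..<13}" using assms by (auto simp: Perms_def)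
  then have "\<pi> ` {..<13} = {..<13}" using endo_inj_surj[of "{..<13::nat}" \<pi>] by simp
  then show ?thesis using \<open>inj_on \<pi> {..<13}\<close> by (simp add: bij_betw_def)
qed

lemma Perms_lt: "\<pi> \<in> Perms \<Longrightarrow> k < 13 \<Longrightarrow> \<pi> k < 13"
  by (auto simp: Perms_def)

lemma perm_unique:
  assumes p1: "\<pi>1 \<in> Perms" and p2: "\<pi>2 \<in> Perms"
    and t1: "TrS (\<lambda>k. v (\<pi>1 k)) = TrS u1" and t2: "TrS (\<lambda>k. v (\<pi>2 k)) = TrS u1"
  shows "\<And>k. k < 13 \<Longrightarrow> \<pi>1 k = \<pi>2 k"
proof -
  have b1: "bij_betw \<pi>1 {..<13} {..<13}" by (rule Perms_bij[OF p1])
  have b2: "bij_betw \<pi>2 {..<13} {..<13}" by (rule Perms_bij[OF p2])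
  define \<rho> where "\<rho> k = the_inv_into {..<13} \<pi>1 (\<pi>2 k)" for k
  have binv: "bij_betw (the_inv_into {..<13} \<pi>1) {..<13} {..<13}" using bij_betw_the_inv_into[OF b1] .
  have brho: "bij_betw \<rho> {..<13} {..<13}"
    unfolding \<rho>_def using bij_betw_trans[OF b2 binv] by (simp add: comp_def)
  have pr: "\<pi>1 (\<rho> k) = \<pi>2 k" if "k < 13" for k
    unfolding \<rho>_def using f_the_inv_into_f_bij_betw[OF b1] bij_betwE[OF b2] that by auto
  have r13: "\<rho> k < 13" if "k < 13" for k using bij_betwE[OF brho] that by auto
  have c: "Cu (\<rho> i) (\<rho> j) (\<rho> k) = Cu i j k" if ijk: "i < 13" "j < 13" "k < 13" for i j k
  proof -
    have "Cu (\<rho> i) (\<rho> j) (\<rho> k) \<longleftrightarrow> (\<rho> i, \<rho> j, \<rho> k) \<in> TrS u1" using r13 ijk by (simp add: TrS_u1)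
    also have "\<dots> \<longleftrightarrow> (\<rho> i, \<rho> j, \<rho> k) \<in> TrS (\<lambda>k. v (\<pi>1 k))" by (simp add: t1)
    also have "\<dots> \<longleftrightarrow> br (v (\<pi>2 i)) (v (\<pi>2 j)) (v (\<pi>2 k)) = 0" using r13 ijk pr by (simp add: TrS_def)
    also have "\<dots> \<longleftrightarrow> (i, j, k) \<in> TrS (\<lambda>k. v (\<pi>2 k))" using ijk by (simp add: TrS_def)
    also have "\<dots> \<longleftrightarrow> Cu i j k" using ijk by (simp add: t2 TrS_u1)
    finally show ?thesis .
  qed
  have "\<rho> k = k" if "k < 13" for k using aut[OF brho c that] by simp
  then show "\<pi>1 k = \<pi>2 k" if "k < 13" for k using pr that by metis
qed

lemma finite_TrS: "finite (TrS v)"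
proof -
  have "TrS v \<subseteq> {..<13} \<times> {..<13} \<times> {..<13}" by (auto simp: TrS_def)
  then show ?thesis by (rule finite_subset) simp
qed

lemma tr_card:
  assumes p: "\<pi> \<in> Perms" shows "card (TrS (\<lambda>k. v (\<pi> k))) = card (TrS v)"
proof -
  have b: "bij_betw \<pi> {..<13} {..<13}" by (rule Perms_bij[OF p])
  have inj: "inj_on \<pi> {..<13}" using b bij_betw_def by blast
  define f where "f = (\<lambda>(i::nat, j::nat, k::nat). (\<pi> i, \<pi> j, \<pi> k))"
  have sur: "\<exists>j'. j' < 13 \<and> j = \<pi> j'" if "j < 13" for j
    using b that unfolding bij_betw_def by (metis imageE lessThan_iff)
  have "f ` TrS (\<lambda>k. v (\<pi> k)) = TrS v"
  proof
    show "f ` TrS (\<lambda>k. v (\<pi> k)) \<subseteq> TrS v" using Perms_lt[OF p] by (auto simp: f_def TrS_def)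
    show "TrS v \<subseteq> f ` TrS (\<lambda>k. v (\<pi> k))"
    proof
      fix t assume t: "t \<in> TrS v"
      obtain i j k where ijk: "t = (i,j,k)" by (cases t) blast
      with t have l: "i < 13" "j < 13" "k < 13" "br (v i) (v j) (v k) = 0" by (auto simp: TrS_def)
      obtain i' j' k' where "i' < 13" "j' < 13" "k' < 13" "i = \<pi> i'" "j = \<pi> j'" "k = \<pi> k'"
        using sur l by metis
      then have "(i',j',k') \<in> TrS (\<lambda>k. v (\<pi> k))" "t = f (i',j',k')" using l ijk by (auto simp: TrS_def f_def)
      then show "t \<in> f ` TrS (\<lambda>k. v (\<pi> k))" by blast
    qed
  qed
  moreover have "inj_on f (TrS (\<lambda>k. v (\<pi> k)))"
  proof (rule inj_onI)
    fix x y assume "x \<in> TrS (\<lambda>k. v (\<pi> k))" "y \<in> TrS (\<lambda>k. v (\<pi> k))" "f x = f y"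
    then show "x = y" using inj_onD[OF inj] by (auto simp: TrS_def f_def)
  qed
  ultimately show ?thesis by (metis card_image)
qed

lemma tr_sub_eq:
  assumes p0: "\<pi>0 \<in> Perms" and t0: "TrS (\<lambda>k. v (\<pi>0 k)) = TrS u1"
    and p: "\<pi> \<in> Perms" and sub: "TrS u1 \<subseteq> TrS (\<lambda>k. v (\<pi> k))"
  shows "TrS (\<lambda>k. v (\<pi> k)) = TrS u1"
proof -
  have "card (TrS (\<lambda>k. v (\<pi> k))) = card (TrS u1)"
    using tr_card[OF p, of v] tr_card[OF p0, of v] t0 by simp
  then show ?thesis using card_subset_eq[OF finite_TrS sub] by simp
qed

definition iota :: "nat \<Rightarrow> 13" where
  "iota = (SOME h. bij_betw h {..<13} (UNIV :: 13 set))"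

lemma iota_bij: "bij_betw iota {..<13} UNIV"
proof -
  obtain h where "bij_betw h {0..<card (UNIV::13 set)} (UNIV::13 set)"
    using ex_bij_betw_nat_finite[of "UNIV :: 13 set"] by auto
  then have "bij_betw h {..<13} (UNIV :: 13 set)" by (simp add: atLeast0LessThan)
  then show ?thesis unfolding iota_def by (rule someI[where P = "\<lambda>h. bij_betw h {..<13} (UNIV :: 13 set)"])
qed

definition vl :: "cvec^13 \<Rightarrow> nat \<Rightarrow> cvec" where "vl l k = l $ iota k"

lemma arr_vl: "arr_of l = (\<lambda>k. line_of (vl l k)) ` {..<13}"
proof -
  have "range (\<lambda>i. line_of (l $ i)) = (\<lambda>i. line_of (l $ i)) ` (iota ` {..<13})"
    using iota_bij by (simp add: bij_betw_def)
  then show ?thesis by (simp add: arr_of_def vl_def image_comp comp_def)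
qed

lemma cfg_vl:
  assumes "l \<in> realizations TYPE(13) A0" shows "cfg (vl l) {..<13}"
proof
  show "finite {..<13::nat}" by simp
  show "vl l k \<noteq> 0" if "k \<in> {..<13}" for k using assms by (simp add: realizations_def vl_def)
  have "inj (\<lambda>i. line_of (l $ i))" using assms by (simp add: realizations_def)
  moreover have "inj_on iota {..<13}" using iota_bij bij_betw_def by blast
  ultimately show "inj_on (\<lambda>k. line_of (vl l k)) {..<13}"
    unfolding vl_def by (metis (no_types, lifting) inj_on_def injD)
qed

lemma real_iso: "l \<in> realizations TYPE(13) A0 \<Longrightarrow> lattice_iso A0 (arr_of l)"
  by (simp add: realizations_def)

definition A1s where "A1s = (\<lambda>k. line_of (u1 k)) ` {..<13}"
definition A2s where "A2s = (\<lambda>k. line_of (u2 k)) ` {..<13}"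

definition mkl :: "(nat \<Rightarrow> cvec) \<Rightarrow> cvec^13" where
  "mkl u = (\<chi> i. u (the_inv_into {..<13} iota i))"

lemma vl_mkl: "k < 13 \<Longrightarrow> vl (mkl u) k = u k"
  using the_inv_into_f_f[of iota "{..<13}" k] iota_bij by (simp add: vl_def mkl_def bij_betw_def)

lemma inv_iota_lt: "the_inv_into {..<13} iota i < 13"
  using bij_betwE[OF bij_betw_the_inv_into[OF iota_bij]] by auto

lemma arr_mkl: "arr_of (mkl u) = (\<lambda>k. line_of (u k)) ` {..<13}"
  unfolding arr_vl using vl_mkl by (auto simp: image_iff)

lemma mkl_real:
  assumes cu: "cfg u {..<13}" and iso: "lattice_iso A1s ((\<lambda>k. line_of (u k)) ` {..<13})"
  shows "mkl u \<in> realizations TYPE(13) A1s"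
  unfolding realizations_def
proof (intro CollectI conjI allI)
  interpret U: cfg u "{..<13}" by fact
  show "mkl u $ i \<noteq> 0" for i using U.nz inv_iota_lt by (simp add: mkl_def)
  show "inj (\<lambda>i. line_of (mkl u $ i))"
  proof (rule injI)
    fix x y assume "line_of (mkl u $ x) = line_of (mkl u $ y)"
    then have "the_inv_into {..<13} iota x = the_inv_into {..<13} iota y"
      using inj_onD[OF U.inj] inv_iota_lt by (simp add: mkl_def)
    then show "x = y" using bij_betw_the_inv_into[OF iota_bij] unfolding bij_betw_def
      by (meson UNIV_I inj_on_def)
  qed
  show "lattice_iso A1s (arr_of (mkl u))" using iso by (simp add: arr_mkl)
qed

lemma iso11: "lattice_iso A1s A1s"
  unfolding A1s_def by (rule iso_from_tr[OF cfg_u1 cfg_u1]) simp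
lemma iso12: "lattice_iso A1s A2s"
  unfolding A1s_def A2s_def by (rule iso_from_tr[OF cfg_u1 cfg_u2]) (simp add: u_tr)

lemma lk1_real: "mkl u1 \<in> realizations TYPE(13) A1s"
  using mkl_real[OF cfg_u1] iso11 by (simp add: A1s_def)
lemma lk2_real: "mkl u2 \<in> realizations TYPE(13) A1s"
  using mkl_real[OF cfg_u2] iso12 by (simp add: A2s_def)

lemma arr_lk1: "arr_of (mkl u1) = A1s" by (simp add: arr_mkl A1s_def)
lemma arr_lk2: "arr_of (mkl u2) = A2s" by (simp add: arr_mkl A2s_def)

abbreviation "SS \<equiv> realizations TYPE(13) A1s"

definition SQ :: "((nat \<Rightarrow> cvec) \<Rightarrow> complex) \<Rightarrow> (cvec^13) set" where
  "SQ Q = {l \<in> SS. \<exists>\<pi>\<in>Perms. TrS u1 \<subseteq> TrS (\<lambda>k. vl l (\<pi> k)) \<and> Q (\<lambda>k. vl l (\<pi> k)) = 0}"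

lemma S_perm:
  assumes l: "l \<in> SS" shows "\<exists>\<pi>\<in>Perms. TrS (\<lambda>k. vl l (\<pi> k)) = TrS u1"
proof -
  have "lattice_iso A1s (arr_of l)" using l by (rule real_iso)
  then obtain \<sigma> where b1: "bij_betw \<sigma> ((\<lambda>k. line_of (u1 k)) ` {..<13}) ((\<lambda>k. line_of (vl l k)) ` {..<13})"
    and b2: "bij_betw (\<lambda>S. \<sigma> ` S) (sing ((\<lambda>k. line_of (u1 k)) ` {..<13})) (sing ((\<lambda>k. line_of (vl l k)) ` {..<13}))"
    unfolding lattice_iso_def A1s_def arr_vl by blast
  obtain \<pi> where p: "\<pi> \<in> {..<13} \<rightarrow>\<^sub>E {..<13}" "inj_on \<pi> {..<13}"
    and e: "\<forall>i\<in>{..<13}. \<forall>j\<in>{..<13}. \<forall>k\<in>{..<13}. br (u1 i) (u1 j) (u1 k) = 0 \<longleftrightarrow> br (vl l (\<pi> i)) (vl l (\<pi> j)) (vl l (\<pi> k)) = 0"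
    using iso_tr[OF cfg_u1 cfg_vl[OF l] b1 b2] by blast
  have "\<pi> \<in> Perms" using p by (simp add: Perms_def)
  moreover have "TrS (\<lambda>k. vl l (\<pi> k)) = TrS u1" using e by (auto simp: TrS_def)
  ultimately show ?thesis by blast
qed

lemma vl_nz: "l \<in> SS \<Longrightarrow> vl l k \<noteq> 0"
  by (simp add: realizations_def vl_def)

lemma S_cover: "l \<in> SS \<Longrightarrow> l \<in> SQ Q1 \<or> l \<in> SQ Q2"
proof -
  assume l: "l \<in> SS"
  then obtain \<pi> where p: "\<pi> \<in> Perms" "TrS (\<lambda>k. vl l (\<pi> k)) = TrS u1" using S_perm by blast
  then have "Q1 (\<lambda>k. vl l (\<pi> k)) = 0 \<or> Q2 (\<lambda>k. vl l (\<pi> k)) = 0"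
    using key_tr[OF p(2)] vl_nz[OF l] by blast
  then show ?thesis using l p by (auto simp: SQ_def)
qed

lemma Q1_cong: "(\<And>k. k \<in> {3,7,8,9,11} \<Longrightarrow> f k = g k) \<Longrightarrow> Q1 f = Q1 g"
  by (simp add: Q1_def)
lemma Q2_cong: "(\<And>k. k \<in> {3,7,8,9,11} \<Longrightarrow> f k = g k) \<Longrightarrow> Q2 f = Q2 g"
  by (simp add: Q2_def)

lemma S_disj: "l \<in> SQ Q1 \<Longrightarrow> l \<in> SQ Q2 \<Longrightarrow> False"
proof -
  assume a1: "l \<in> SQ Q1" and a2: "l \<in> SQ Q2"
  then have l: "l \<in> SS" by (simp add: SQ_def)
  obtain \<pi>0 where p0: "\<pi>0 \<in> Perms" "TrS (\<lambda>k. vl l (\<pi>0 k)) = TrS u1" using S_perm[OF l] by blast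
  obtain \<pi>1 where p1: "\<pi>1 \<in> Perms" "TrS u1 \<subseteq> TrS (\<lambda>k. vl l (\<pi>1 k))" "Q1 (\<lambda>k. vl l (\<pi>1 k)) = 0"
    using a1 by (auto simp: SQ_def)
  obtain \<pi>2 where p2: "\<pi>2 \<in> Perms" "TrS u1 \<subseteq> TrS (\<lambda>k. vl l (\<pi>2 k))" "Q2 (\<lambda>k. vl l (\<pi>2 k)) = 0"
    using a2 by (auto simp: SQ_def)
  have t1: "TrS (\<lambda>k. vl l (\<pi>1 k)) = TrS u1" by (rule tr_sub_eq[OF p0 p1(1,2)])
  have t2: "TrS (\<lambda>k. vl l (\<pi>2 k)) = TrS u1" by (rule tr_sub_eq[OF p0 p2(1,2)])
  have eq: "\<pi>1 k = \<pi>2 k" if "k < 13" for k using perm_unique[OF p1(1) p2(1) t1 t2 that] .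
  have "Q2 (\<lambda>k. vl l (\<pi>1 k)) = Q2 (\<lambda>k. vl l (\<pi>2 k))" by (rule Q2_cong) (auto simp: eq)
  then have "Q2 (\<lambda>k. vl l (\<pi>1 k)) = 0" using p2(3) by simp
  then show False using key_tr[OF t1] vl_nz[OF l] p1(3) by blast
qed

lemma dotp_mat: "dotp (M *v a) b = dotp a (transpose M *v b)"
  by (simp add: dotp_def matrix_vector_mult_def transpose_def sum_3 algebra_simps)

lemma line_img:
  assumes B1: "B ** g = mat 1" and B2: "g ** B = mat 1"
  shows "(\<lambda>p. g *v p) ` line_of a = line_of (transpose B *v a)"
proof -
  have key: "dotp (transpose B *v a) (g *v p) = dotp a p" for p
    by (simp only: dotp_mat transpose_transpose matrix_vector_mul_assoc B1 matrix_vector_mul_lid)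
  show ?thesis
  proof
    show "(\<lambda>p. g *v p) ` line_of a \<subseteq> line_of (transpose B *v a)"
      using key by (auto simp: line_of_dotp)
    show "line_of (transpose B *v a) \<subseteq> (\<lambda>p. g *v p) ` line_of a"
    proof
      fix q assume q: "q \<in> line_of (transpose B *v a)"
      have gq: "g *v (B *v q) = q" by (simp add: matrix_vector_mul_assoc B2)
      then have "dotp a (B *v q) = 0" using key[of "B *v q"] q by (simp add: line_of_dotp)
      then have "B *v q \<in> line_of a" by (simp add: line_of_dotp)
      then show "q \<in> (\<lambda>p. g *v p) ` line_of a" using gq by force
    qed
  qed
qed

lemma pgl_self: "X \<in> pgl_orbit X"
proof -
  have "(\<lambda>L. (\<lambda>p. (mat 1 :: complex^3^3) *v p) ` L) ` X = X" by simp
  moreover have "invertible (mat 1 :: complex^3^3)" by (simp add: invertible_def)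
  ultimately show ?thesis unfolding pgl_orbit_def by blast
qed

lemma br_smult: "br (x *s a) (y *s b) (z *s c) = x * y * z * br a b c"
  by (simp add: br_expand algebra_simps)

lemma Q1_scale: "Q1 (\<lambda>k. c k *s (h *v w k)) = (c 3 * c 3 * c 7 * c 8 * c 9 * c 11 * det h * det h) * Q1 w"
  by (simp add: Q1_def br_smult br_mat algebra_simps)
lemma Q2_scale: "Q2 (\<lambda>k. c k *s (h *v w k)) = (c 3 * c 3 * c 7 * c 8 * c 9 * c 11 * det h * det h) * Q2 w"
  by (simp add: Q2_def br_smult br_mat algebra_simps)

lemma saturate:
  assumes QS: "\<And>c h w. Q w = 0 \<Longrightarrow> Q (\<lambda>k. c k *s (h *v w k)) = 0"
    and Qc: "\<And>f g. (\<And>k. k \<in> {3,7,8,9,11} \<Longrightarrow> f k = g k) \<Longrightarrow> Q f = Q g"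
    and l: "l \<in> SQ Q" and l': "l' \<in> SS" and orb: "pgl_orbit (arr_of l') = pgl_orbit (arr_of l)"
  shows "l' \<in> SQ Q"
proof -
  have lS: "l \<in> SS" using l by (simp add: SQ_def)
  interpret L: cfg "vl l" "{..<13}" using cfg_vl[OF lS] .
  interpret L': cfg "vl l'" "{..<13}" using cfg_vl[OF l'] .
  have "arr_of l' \<in> pgl_orbit (arr_of l)" using pgl_self[of "arr_of l'"] orb by simp
  then obtain g :: "complex^3^3" where g: "invertible g" "arr_of l' = (\<lambda>L. (\<lambda>p. g *v p) ` L) ` arr_of l"
    unfolding pgl_orbit_def by blast
  obtain B where B1: "B ** g = mat 1" and B2: "g ** B = mat 1" using g(1) unfolding invertible_def by blast
  define h where "h = transpose B"
  have "det B * det g = 1" using B1 det_mul[of B g] by simp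
  then have dh: "det h \<noteq> 0" by (auto simp: h_def det_transpose)
  have ginj: "inj (\<lambda>p. g *v p)"
  proof (rule injI)
    fix x y assume "g *v x = g *v y"
    then have "B *v (g *v x) = B *v (g *v y)" by simp
    then show "x = y" by (simp add: matrix_vector_mul_assoc B1)
  qed
  have img: "(\<lambda>p. g *v p) ` line_of (vl l k) = line_of (h *v vl l k)" for k
    unfolding h_def by (rule line_img[OF B1 B2])
  have ex: "\<exists>m. m < 13 \<and> line_of (h *v vl l k) = line_of (vl l' m)" if k: "k < 13" for k
  proof -
    have "line_of (vl l k) \<in> arr_of l" unfolding arr_vl using k by blast
    then have "(\<lambda>p. g *v p) ` line_of (vl l k) \<in> arr_of l'" unfolding g(2) by (rule imageI)
    then have "line_of (h *v vl l k) \<in> (\<lambda>k. line_of (vl l' k)) ` {..<13}" unfolding img arr_vl .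
    then show ?thesis by blast
  qed
  define \<rho> where "\<rho> k = (SOME m. m < 13 \<and> line_of (h *v vl l k) = line_of (vl l' m))" for k
  have rho: "\<rho> k < 13 \<and> line_of (h *v vl l k) = line_of (vl l' (\<rho> k))" if "k < 13" for k
    unfolding \<rho>_def using someI_ex[OF ex[OF that]] .
  have ex2: "\<exists>c. c \<noteq> 0 \<and> vl l' (\<rho> k) = c *s (h *v vl l k)" if k: "k < 13" for k
    using line_eq_prop[of "h *v vl l k" "vl l' (\<rho> k)"] rho[OF k] mat_nz[OF dh L.nz] L'.nz k by auto
  define cf where "cf k = (SOME c. c \<noteq> 0 \<and> vl l' (\<rho> k) = c *s (h *v vl l k))" for k
  have cf: "vl l' (\<rho> k) = cf k *s (h *v vl l k)" if "k < 13" for k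
    unfolding cf_def using someI_ex[OF ex2[OF that]] by blast
  have rinj: "inj_on \<rho> {..<13}"
  proof (rule inj_onI)
    fix i j assume ij: "i \<in> {..<13}" "j \<in> {..<13}" "\<rho> i = \<rho> j"
    then have "line_of (h *v vl l i) = line_of (h *v vl l j)" using rho by auto
    then have "(\<lambda>p. g *v p) ` line_of (vl l i) = (\<lambda>p. g *v p) ` line_of (vl l j)" using img by simp
    then have "line_of (vl l i) = line_of (vl l j)" using ginj by (simp add: inj_image_eq_iff)
    then show "i = j" using inj_onD[OF L.inj] ij by blast
  qed
  obtain \<pi> where p: "\<pi> \<in> Perms" "TrS u1 \<subseteq> TrS (\<lambda>k. vl l (\<pi> k))" "Q (\<lambda>k. vl l (\<pi> k)) = 0"
    using l by (auto simp: SQ_def)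
  define \<pi>' where "\<pi>' = restrict (\<lambda>k. \<rho> (\<pi> k)) {..<13}"
  have p13: "\<pi> k < 13" if "k < 13" for k using Perms_lt[OF p(1) that] .
  have p': "\<pi>' \<in> Perms"
    unfolding Perms_def
  proof (intro CollectI conjI)
    show "\<pi>' \<in> {..<13} \<rightarrow>\<^sub>E {..<13}" using rho p13 by (auto simp: \<pi>'_def)
    have "inj_on \<pi> {..<13}" using p(1) by (simp add: Perms_def)
    show "inj_on \<pi>' {..<13}"
    proof (rule inj_onI)
      fix i j assume ij: "i \<in> {..<13}" "j \<in> {..<13}" "\<pi>' i = \<pi>' j"
      then have "\<rho> (\<pi> i) = \<rho> (\<pi> j)" by (simp add: \<pi>'_def)
      then have "\<pi> i = \<pi> j" using inj_onD[OF rinj] p13 ij by simp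
      then show "i = j" using inj_onD[OF \<open>inj_on \<pi> {..<13}\<close>] ij by blast
    qed
  qed
  have vv: "vl l' (\<pi>' k) = cf (\<pi> k) *s (h *v vl l (\<pi> k))" if "k < 13" for k
    using cf[OF p13[OF that]] that by (simp add: \<pi>'_def)
  have "TrS u1 \<subseteq> TrS (\<lambda>k. vl l' (\<pi>' k))"
  proof
    fix t assume t: "t \<in> TrS u1"
    obtain i j k where ijk: "t = (i,j,k)" by (cases t) blast
    with t p(2) have a: "i < 13" "j < 13" "k < 13" "br (vl l (\<pi> i)) (vl l (\<pi> j)) (vl l (\<pi> k)) = 0"
      by (auto simp: TrS_def)
    then show "t \<in> TrS (\<lambda>k. vl l' (\<pi>' k))" using ijk by (simp add: TrS_def vv br_smult br_mat)
  qed
  moreover have "Q (\<lambda>k. vl l' (\<pi>' k)) = 0"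
  proof -
    have "Q (\<lambda>k. vl l' (\<pi>' k)) = Q (\<lambda>k. cf (\<pi> k) *s (h *v vl l (\<pi> k)))" by (rule Qc) (auto simp: vv)
    also have "\<dots> = 0" using QS[OF p(3)] .
    finally show ?thesis .
  qed
  ultimately show ?thesis using l' p' by (auto simp: SQ_def)
qed

lemma Q1S: "Q1 w = 0 \<Longrightarrow> Q1 (\<lambda>k. c k *s (h *v w k)) = 0" by (simp add: Q1_scale)
lemma Q2S: "Q2 w = 0 \<Longrightarrow> Q2 (\<lambda>k. c k *s (h *v w k)) = 0" by (simp add: Q2_scale)

lemma sat1: "l \<in> SQ Q1 \<Longrightarrow> l' \<in> SS \<Longrightarrow> pgl_orbit (arr_of l') = pgl_orbit (arr_of l) \<Longrightarrow> l' \<in> SQ Q1"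
  apply (rule saturate[where Q = Q1])
      apply (simp add: Q1_scale)
     apply (simp add: Q1_def)
  by assumption+

lemma sat2: "l \<in> SQ Q2 \<Longrightarrow> l' \<in> SS \<Longrightarrow> pgl_orbit (arr_of l') = pgl_orbit (arr_of l) \<Longrightarrow> l' \<in> SQ Q2"
  apply (rule saturate[where Q = Q2])
      apply (simp add: Q2_scale)
     apply (simp add: Q2_def)
  by assumption+

lemma cont_br: "continuous_on UNIV (\<lambda>l::cvec^13. br (vl l a) (vl l b) (vl l c))"
  unfolding br_expand vl_def by (intro continuous_intros)

lemma cont_Q1: "continuous_on UNIV (\<lambda>l::cvec^13. Q1 (\<lambda>k. vl l (\<pi> k)))"
  unfolding Q1_def br_expand vl_def by (intro continuous_intros)
lemma cont_Q2: "continuous_on UNIV (\<lambda>l::cvec^13. Q2 (\<lambda>k. vl l (\<pi> k)))"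
  unfolding Q2_def br_expand vl_def by (intro continuous_intros)

lemma closed_zero: "continuous_on UNIV f \<Longrightarrow> closed {l::cvec^13. f l = (0::complex)}"
  using closed_Collect_eq[of f "\<lambda>_. 0"] by simp

lemma closed_F:
  fixes Q :: "(nat \<Rightarrow> cvec) \<Rightarrow> complex"
  assumes cQ: "\<And>\<pi>. continuous_on UNIV (\<lambda>l::cvec^13. Q (\<lambda>k. vl l (\<pi> k)))"
  shows "closed {l. \<exists>\<pi>\<in>Perms. TrS u1 \<subseteq> TrS (\<lambda>k. vl l (\<pi> k)) \<and> Q (\<lambda>k. vl l (\<pi> k)) = 0}"
proof -
  define brt where "brt \<pi> t l = (case t of (i,j,k) \<Rightarrow> br (vl l (\<pi> i)) (vl l (\<pi> j)) (vl l (\<pi> k)))" for \<pi> :: "nat \<Rightarrow> nat" and t :: "nat \<times> nat \<times> nat" and l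
  have e: "TrS u1 \<subseteq> TrS (\<lambda>k. vl l (\<pi> k)) \<longleftrightarrow> (\<forall>t\<in>TrS u1. brt \<pi> t l = 0)" for l \<pi>
    by (auto simp: TrS_def brt_def)
  have "{l. \<exists>\<pi>\<in>Perms. TrS u1 \<subseteq> TrS (\<lambda>k. vl l (\<pi> k)) \<and> Q (\<lambda>k. vl l (\<pi> k)) = 0} =
        (\<Union>\<pi>\<in>Perms. (\<Inter>t\<in>TrS u1. {l. brt \<pi> t l = 0}) \<inter> {l. Q (\<lambda>k. vl l (\<pi> k)) = 0})"
    unfolding e by blast
  moreover have "closed (\<Union>\<pi>\<in>Perms. (\<Inter>t\<in>TrS u1. {l. brt \<pi> t l = 0}) \<inter> {l. Q (\<lambda>k. vl l (\<pi> k)) = 0})"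
  proof (rule closed_UN[OF finite_Perms], intro ballI closed_Int)
    fix \<pi> :: "nat \<Rightarrow> nat"
    show "closed (\<Inter>t\<in>TrS u1. {l. brt \<pi> t l = 0})"
    proof (intro closed_INT ballI)
      fix t :: "nat \<times> nat \<times> nat"
      obtain i j k where t: "t = (i,j,k)" by (cases t) blast
      show "closed {l. brt \<pi> t l = 0}" unfolding t brt_def by (simp add: closed_zero cont_br)
    qed
    show "closed {l. Q (\<lambda>k. vl l (\<pi> k)) = 0}" by (rule closed_zero[OF cQ])
  qed
  ultimately show ?thesis by simp
qed

lemma closedin_SQ:
  fixes Q :: "(nat \<Rightarrow> cvec) \<Rightarrow> complex"
  assumes cQ: "\<And>\<pi>. continuous_on UNIV (\<lambda>l::cvec^13. Q (\<lambda>k. vl l (\<pi> k)))"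
  shows "closedin (top_of_set SS) (SQ Q)"
proof -
  have "SQ Q = SS \<inter> {l. \<exists>\<pi>\<in>Perms. TrS u1 \<subseteq> TrS (\<lambda>k. vl l (\<pi> k)) \<and> Q (\<lambda>k. vl l (\<pi> k)) = 0}"
    by (auto simp: SQ_def)
  then show ?thesis using closedin_closed_Int[OF closed_F[OF cQ]] by simp
qed

abbreviation "orb l \<equiv> pgl_orbit (arr_of l)"

definition PP :: "cvec set set set set \<Rightarrow> bool" where
  "PP U \<longleftrightarrow> U \<subseteq> (\<lambda>l. pgl_orbit (arr_of l)) ` SS \<and> openin (top_of_set SS) {l \<in> SS. pgl_orbit (arr_of l) \<in> U}"

lemma mt_eq: "moduli_top TYPE(13) A1s = topology PP"
  unfolding moduli_top_def PP_def by simp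

lemma istop: "istopology PP"
  unfolding istopology_def
proof (intro conjI allI impI)
  fix S T assume "PP S" "PP T"
  then have o: "openin (top_of_set SS) ({l \<in> SS. orb l \<in> S} \<inter> {l \<in> SS. orb l \<in> T})"
    "S \<subseteq> orb ` SS" unfolding PP_def by auto
  have "{l \<in> SS. orb l \<in> S \<inter> T} = {l \<in> SS. orb l \<in> S} \<inter> {l \<in> SS. orb l \<in> T}" by auto
  then show "PP (S \<inter> T)" unfolding PP_def using o by auto
next
  fix K assume K: "\<forall>U\<in>K. PP U"
  have "{l \<in> SS. orb l \<in> \<Union>K} = \<Union>((\<lambda>U. {l \<in> SS. orb l \<in> U}) ` K)" by auto
  moreover have "openin (top_of_set SS) (\<Union>((\<lambda>U. {l \<in> SS. orb l \<in> U}) ` K))"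
    using K by (intro openin_Union) (auto simp: PP_def)
  moreover have "\<Union>K \<subseteq> orb ` SS" using K by (auto simp: PP_def)
  ultimately show "PP (\<Union>K)" unfolding PP_def by simp
qed

lemma openin_mt: "openin (moduli_top TYPE(13) A1s) = PP"
  unfolding mt_eq using istop by simp

lemma pre1: "{l \<in> SS. orb l \<in> orb ` SQ Q1} = SQ Q1"
proof
  show "{l \<in> SS. orb l \<in> orb ` SQ Q1} \<subseteq> SQ Q1" using sat1 by blast
  show "SQ Q1 \<subseteq> {l \<in> SS. orb l \<in> orb ` SQ Q1}" by (auto simp: SQ_def)
qed

lemma pre2: "{l \<in> SS. orb l \<in> orb ` SQ Q2} = SQ Q2"
proof
  show "{l \<in> SS. orb l \<in> orb ` SQ Q2} \<subseteq> SQ Q2" using sat2 by blast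
  show "SQ Q2 \<subseteq> {l \<in> SS. orb l \<in> orb ` SQ Q2} " by (auto simp: SQ_def)
qed

lemma SS_split: "SS = SQ Q1 \<union> SQ Q2" using S_cover by (auto simp: SQ_def)

lemma open1: "openin (top_of_set SS) (SQ Q1)"
proof -
  have "SQ Q1 = SS - SQ Q2" using SS_split S_disj by blast
  moreover have "openin (top_of_set SS) (SS - SQ Q2)"
    using openin_diff[OF openin_topspace closedin_SQ[OF cont_Q2]] by simp
  ultimately show ?thesis by simp
qed

lemma open2: "openin (top_of_set SS) (SQ Q2)"
proof -
  have "SQ Q2 = SS - SQ Q1" using SS_split S_disj by blast
  moreover have "openin (top_of_set SS) (SS - SQ Q1)"
    using openin_diff[OF openin_topspace closedin_SQ[OF cont_Q1]] by simp
  ultimately show ?thesis by simp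
qed

lemma PP1: "PP (orb ` SQ Q1)" unfolding PP_def pre1 using open1 by (auto simp: SQ_def)
lemma PP2: "PP (orb ` SQ Q2)" unfolding PP_def pre2 using open2 by (auto simp: SQ_def)

lemma topsp: "topspace (moduli_top TYPE(13) A1s) = orb ` SS"
proof -
  have "{l \<in> SS. orb l \<in> orb ` SS} = topspace (top_of_set SS)" by auto
  then have "PP (orb ` SS)" unfolding PP_def by (simp only: openin_topspace) simp
  then show ?thesis unfolding topspace_def openin_mt by (auto simp: PP_def)
qed

lemma compl1: "orb ` SS - orb ` SQ Q1 = orb ` SQ Q2"
proof
  show "orb ` SS - orb ` SQ Q1 \<subseteq> orb ` SQ Q2" using SS_split by blast
  show "orb ` SQ Q2 \<subseteq> orb ` SS - orb ` SQ Q1"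
  proof
    fix x assume "x \<in> orb ` SQ Q2"
    then obtain l where l: "l \<in> SQ Q2" "x = orb l" by blast
    have "x \<notin> orb ` SQ Q1"
    proof
      assume "x \<in> orb ` SQ Q1"
      then obtain l1 where "l1 \<in> SQ Q1" "x = orb l1" by blast
      then have "l \<in> SQ Q1" using sat1 l by (metis (no_types, lifting) CollectD SQ_def)
      then show False using S_disj l by blast
    qed
    then show "x \<in> orb ` SS - orb ` SQ Q1" using l by (auto simp: SQ_def)
  qed
qed

lemma clopen1: "openin (moduli_top TYPE(13) A1s) (orb ` SQ Q1)" "closedin (moduli_top TYPE(13) A1s) (orb ` SQ Q1)"
proof -
  show "openin (moduli_top TYPE(13) A1s) (orb ` SQ Q1)" unfolding openin_mt by (rule PP1)
  show "closedin (moduli_top TYPE(13) A1s) (orb ` SQ Q1)"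
    unfolding closedin_def topsp compl1 openin_mt using PP2 by (auto simp: SQ_def)
qed

lemma lk1_S1: "mkl u1 \<in> SQ Q1"
proof -
  define \<pi> where "\<pi> = restrict id {..<13::nat}"
  have p: "\<pi> \<in> Perms" by (auto simp: Perms_def \<pi>_def)
  have e: "vl (mkl u1) (\<pi> k) = u1 k" if "k < 13" for k using vl_mkl that by (simp add: \<pi>_def)
  have "TrS (\<lambda>k. vl (mkl u1) (\<pi> k)) = TrS u1" by (auto simp: TrS_def e)
  moreover have "Q1 (\<lambda>k. vl (mkl u1) (\<pi> k)) = Q1 u1" by (rule Q1_cong) (auto simp: e)
  ultimately show ?thesis using lk1_real p Q1_u1 by (auto simp: SQ_def)
qed

lemma lk2_S2: "mkl u2 \<in> SQ Q2"
proof -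
  define \<pi> where "\<pi> = restrict id {..<13::nat}"
  have p: "\<pi> \<in> Perms" by (auto simp: Perms_def \<pi>_def)
  have e: "vl (mkl u2) (\<pi> k) = u2 k" if "k < 13" for k using vl_mkl that by (simp add: \<pi>_def)
  have "TrS (\<lambda>k. vl (mkl u2) (\<pi> k)) = TrS u1" using u_tr by (auto simp: TrS_def e)
  moreover have "Q2 (\<lambda>k. vl (mkl u2) (\<pi> k)) = Q2 u2" by (rule Q2_cong) (auto simp: e)
  ultimately show ?thesis using lk2_real p Q2_u2 by (auto simp: SQ_def)
qed

lemma not_conn: "\<not> connected_component_of (moduli_top TYPE(13) A1s) (pgl_orbit A1s) (pgl_orbit A2s)"
proof
  assume "connected_component_of (moduli_top TYPE(13) A1s) (pgl_orbit A1s) (pgl_orbit A2s)"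
  then obtain T where T: "connectedin (moduli_top TYPE(13) A1s) T" "pgl_orbit A1s \<in> T" "pgl_orbit A2s \<in> T"
    unfolding connected_component_of_def by blast
  have a: "pgl_orbit A1s \<in> orb ` SQ Q1" using lk1_S1 arr_lk1 by (metis image_eqI)
  have b: "pgl_orbit A2s \<in> orb ` SQ Q2" using lk2_S2 arr_lk2 by (metis image_eqI)
  have "T \<subseteq> orb ` SQ Q1 \<or> disjnt T (orb ` SQ Q1)"
    by (rule connectedin_clopen_cases[OF T(1) clopen1(2) clopen1(1)])
  then have "pgl_orbit A2s \<in> orb ` SQ Q1" using a T(2,3) by (auto simp: disjnt_iff)
  then show False using b compl1 by blast
qed

lemma arr_A1s: "arrangement A1s"
  unfolding arrangement_def is_line_def A1s_def using cfg.nz[OF cfg_u1] by auto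
lemma arr_A2s: "arrangement A2s"
  unfolding arrangement_def is_line_def A2s_def using cfg.nz[OF cfg_u2] by auto

lemma card_A1s: "card A1s = 13"
  unfolding A1s_def using card_image[OF cfg.inj[OF cfg_u1]] by simp

lemma vecZ_rat: "vecZ t $ i \<in> \<rat>"
proof -
  obtain a b c where t: "t = (a,b,c)" by (cases t) blast
  have "vector [of_int a, of_int b, of_int c] $ i \<in> (\<rat> :: complex set)" for i :: 3
    using exhaust_3[of i] by (elim disjE) simp_all
  then show ?thesis by (simp add: t)
qed
lemma rat1: "rational_arr A1s"
  unfolding rational_arr_def A1s_def
proof
  fix L assume "L \<in> (\<lambda>k. line_of (u1 k)) ` {..<13}"
  then obtain k where k: "k < 13" "L = line_of (u1 k)" by blast
  have "u1 k \<noteq> 0 \<and> (\<forall>i. u1 k $ i \<in> \<rat>) \<and> L = line_of (u1 k)"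
    using cfg.nz[OF cfg_u1] k by (simp add: u1_def vecZ_rat)
  then show "\<exists>a. a \<noteq> 0 \<and> (\<forall>i. a $ i \<in> \<rat>) \<and> L = line_of a" by blast
qed
lemma rat2: "rational_arr A2s"
  unfolding rational_arr_def A2s_def
proof
  fix L assume "L \<in> (\<lambda>k. line_of (u2 k)) ` {..<13}"
  then obtain k where k: "k < 13" "L = line_of (u2 k)" by blast
  have "u2 k \<noteq> 0 \<and> (\<forall>i. u2 k $ i \<in> \<rat>) \<and> L = line_of (u2 k)"
    using cfg.nz[OF cfg_u2] k by (simp add: u2_def vecZ_rat)
  then show "\<exists>a. a \<noteq> 0 \<and> (\<forall>i. a $ i \<in> \<rat>) \<and> L = line_of a" by blast
qed

lemma lt13: "{..<13::nat} = {0,1,2,3,4,5,6,7,8,9,10,11,12}" by auto presburger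

lemma A1_eq: "{lin 0 2 (-1), lin 1 (-1) 0, lin 1 1 (-1), lin 1 0 0, lin 2 (-2) 1,
                 lin 1 0 (-1), lin 2 6 (-5), lin 0 1 0, lin 0 1 (-1), lin 0 0 1} \<union> {lin 3 2 (-3), lin 0 5 (-3), lin 6 (-2) (-3)} = A1s"
  unfolding A1s_def lt13 by (simp add: u1_def U1_def lin_def del: Un_insert_right)

lemma A2_eq: "{lin 0 2 (-1), lin 1 (-1) 0, lin 1 1 (-1), lin 1 0 0, lin 2 (-2) 1,
                 lin 1 0 (-1), lin 2 6 (-5), lin 0 1 0, lin 0 1 (-1), lin 0 0 1} \<union> {lin 1 (-3) (-1), lin 0 2 1, lin 4 6 (-13)} = A2s"
  unfolding A2s_def lt13 by (simp add: u2_def U2_def lin_def del: Un_insert_right)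

theorem theorem3p5:
  fixes A :: "cvec set set"
  defines "A \<equiv> {lin 0 2 (-1), lin 1 (-1) 0, lin 1 1 (-1), lin 1 0 0, lin 2 (-2) 1,
                 lin 1 0 (-1), lin 2 6 (-5), lin 0 1 0, lin 0 1 (-1), lin 0 0 1}"
  shows "rational_pair TYPE(13)
           (A \<union> {lin 3 2 (-3), lin 0 5 (-3), lin 6 (-2) (-3)})
           (A \<union> {lin 1 (-3) (-1), lin 0 2 1, lin 4 6 (-13)})"
  unfolding A_def A1_eq A2_eq rational_pair_def is_pair_def
  using arr_A1s arr_A2s card_A1s iso12 not_conn rat1 rat2 by simp

end
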